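(* Let $W=W_{\mathrm{aff}}\rtimes\Omega$ be an extended Coxeter group and let $1\to T\to G\to W\to1$ be a group extension of $W$ by an abelian group $T$ (written multiplicatively, with the $W$-action on $T$ induced by conjugation in $G$), together with a set-theoretic section $n:W\to G$ of $G\to W$ such that $n(ww')=n(w)n(w')$ whenever $\ell(ww')=\ell(w)+\ell(w')$. Let $\phi(w,w'):=n(w)n(w')n(ww')^{-1}\in T$. Then there is a unique $W$-equivariant group homomorphism $h:\mathbb Z[\mathfrak H]\to T$ with $h(\mathbf a_s)=n(s)^2$ for all $s\in S$, and \[ \phi(w,w')=h\big(\mathbb X(w,w')\big)\quad\text{for all } w,w'\in W. \]
   Context: For a Coxeter group $(W_{\mathrm{aff}},S)$ with length $\ell$, $\mathfrak H=\{vsv^{-1}:v\in W_{\mathrm{aff}},s\in S\}$ is the set of hyperplanes; for $v=s_1\cdots s_r$ reduced the hyperplanes separating $1$ and $v$ are $(s_1\cdots s_{i-1})s_i(s_1\cdots s_{i-1})^{-1}$, and $H$ separates $v_1,v_2$ iff $v_1^{-1}Hv_1$ separates $1$ and $v_1^{-1}v_2$. Extended Coxeter group: $W=W_{\mathrm{aff}}\rtimes\Omega$ with $(W_{\mathrm{aff}},S)$ Coxeter and $\Omega$ preserving $S$ by conjugation; $\ell(vu)=\ell(v)$ and $vu$ is identified with the chamber $v$ for questions of separation ($v\in W_{\mathrm{aff}},u\in\Omega$). $W$ acts on $\mathfrak H$ by conjugation, hence on the free abelian group $\mathbb Z[\mathfrak H]$ (written multiplicatively, generators $\mathbf a_H$).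 $\mathbb X(w,w')=\prod_H\mathbf a_H\in\mathbb Z[\mathfrak H]$, product over all $H\in\mathfrak H$ separating both $1$ from $w$ and $w$ from $ww'$. *)

theory Defs
  imports "HOL-Algebra.Algebra" "HOL-Algebra.Free_Abelian_Groups"
begin

definition word_prod :: "('a, 'b) monoid_scheme \<Rightarrow> 'a list \<Rightarrow> 'a" where
  "word_prod W xs = foldr (\<lambda>x y. x \<otimes>\<^bsub>W\<^esub> y) xs \<one>\<^bsub>W\<^esub>"

(* The presentation is expressed by its universal property; it suffices to test groups
   whose carrier lives in the type of sets of words over S. *)
definition coxeter_system :: "'w monoid \<Rightarrow> 'w set \<Rightarrow> bool" where
  "coxeter_system W S \<longleftrightarrow> group W \<and> S \<subseteq> carrier W \<and>
     (\<forall>s\<in>S. s \<noteq> \<one>\<^bsub>W\<^esub> \<and> s \<otimes>\<^bsub>W\<^esub> s = \<one>\<^bsub>W\<^esub>) \<and>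
     generate W S = carrier W \<and>
     (\<forall>(H :: 'w list set monoid) f. group H \<and> f \<in> S \<rightarrow> carrier H \<and>
        (\<forall>s\<in>S. \<forall>t\<in>S. group.ord W (s \<otimes>\<^bsub>W\<^esub> t) \<noteq> 0 \<longrightarrow>
            (f s \<otimes>\<^bsub>H\<^esub> f t) [^]\<^bsub>H\<^esub> group.ord W (s \<otimes>\<^bsub>W\<^esub> t) = \<one>\<^bsub>H\<^esub>)
      \<longrightarrow> (\<exists>\<phi>\<in>hom W H. \<forall>s\<in>S. \<phi> s = f s))"

definition ext_coxeter :: "'w monoid \<Rightarrow> 'w set \<Rightarrow> 'w set \<Rightarrow> 'w set \<Rightarrow> bool" where
  "ext_coxeter W Waff S Om \<longleftrightarrow> group W \<and> Waff \<lhd> W \<and> subgroup Om W \<and>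
     Waff \<inter> Om = {\<one>\<^bsub>W\<^esub>} \<and>
     (\<forall>w\<in>carrier W. \<exists>v\<in>Waff. \<exists>u\<in>Om. w = v \<otimes>\<^bsub>W\<^esub> u) \<and>
     coxeter_system (W\<lparr>carrier := Waff\<rparr>) S \<and>
     (\<forall>u\<in>Om. \<forall>s\<in>S. u \<otimes>\<^bsub>W\<^esub> s \<otimes>\<^bsub>W\<^esub> inv\<^bsub>W\<^esub> u \<in> S)"

definition chamber :: "'w monoid \<Rightarrow> 'w set \<Rightarrow> 'w set \<Rightarrow> 'w \<Rightarrow> 'w" where
  "chamber W Waff Om w = (THE v. v \<in> Waff \<and> (\<exists>u\<in>Om. w = v \<otimes>\<^bsub>W\<^esub> u))"

definition aff_len :: "'w monoid \<Rightarrow> 'w set \<Rightarrow> 'w \<Rightarrow> nat" where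
  "aff_len W S v = (LEAST n. \<exists>xs. length xs = n \<and> set xs \<subseteq> S \<and> word_prod W xs = v)"

definition ext_len :: "'w monoid \<Rightarrow> 'w set \<Rightarrow> 'w set \<Rightarrow> 'w set \<Rightarrow> 'w \<Rightarrow> nat" where
  "ext_len W Waff S Om w = aff_len W S (chamber W Waff Om w)"

definition reduced_word :: "'w monoid \<Rightarrow> 'w set \<Rightarrow> 'w \<Rightarrow> 'w list \<Rightarrow> bool" where
  "reduced_word W S v xs \<longleftrightarrow> set xs \<subseteq> S \<and> word_prod W xs = v \<and> length xs = aff_len W S v"

definition hyperplanes :: "'w monoid \<Rightarrow> 'w set \<Rightarrow> 'w set \<Rightarrow> 'w set" where
  "hyperplanes W Waff S = {v \<otimes>\<^bsub>W\<^esub> s \<otimes>\<^bsub>W\<^esub> inv\<^bsub>W\<^esub> v | v s. v \<in> Waff \<and> s \<in> S}"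

definition sep_one :: "'w monoid \<Rightarrow> 'w set \<Rightarrow> 'w \<Rightarrow> 'w set" where
  "sep_one W S v = {H. \<exists>xs. reduced_word W S v xs \<and>
      (\<exists>i<length xs. H = word_prod W (take i xs) \<otimes>\<^bsub>W\<^esub> xs ! i \<otimes>\<^bsub>W\<^esub> inv\<^bsub>W\<^esub> (word_prod W (take i xs)))}"

(* H separates w1 and w2 (elements of W identified with their chambers in Waff) *)
definition separates :: "'w monoid \<Rightarrow> 'w set \<Rightarrow> 'w set \<Rightarrow> 'w set \<Rightarrow> 'w \<Rightarrow> 'w \<Rightarrow> 'w \<Rightarrow> bool" where
  "separates W Waff S Om H w1 w2 \<longleftrightarrow>
     (let c1 = chamber W Waff Om w1; c2 = chamber W Waff Om w2 in
      inv\<^bsub>W\<^esub> c1 \<otimes>\<^bsub>W\<^esub> H \<otimes>\<^bsub>W\<^esub> c1 \<in> sep_one W S (inv\<^bsub>W\<^esub> c1 \<otimes>\<^bsub>W\<^esub> c2))"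

(* X(w,w') in Z[H] (group law written additively on the poly_mapping type) *)
definition XX :: "'w monoid \<Rightarrow> 'w set \<Rightarrow> 'w set \<Rightarrow> 'w set \<Rightarrow> 'w \<Rightarrow> 'w \<Rightarrow> 'w \<Rightarrow>\<^sub>0 int" where
  "XX W Waff S Om w w' = (\<Sum>H \<in> {H \<in> hyperplanes W Waff S.
        separates W Waff S Om H \<one>\<^bsub>W\<^esub> w \<and> separates W Waff S Om H w (w \<otimes>\<^bsub>W\<^esub> w')}. frag_of H)"

definition hyp_act :: "'w monoid \<Rightarrow> 'w \<Rightarrow> ('w \<Rightarrow>\<^sub>0 int) \<Rightarrow> ('w \<Rightarrow>\<^sub>0 int)" where
  "hyp_act W w x = frag_extend (\<lambda>H. frag_of (w \<otimes>\<^bsub>W\<^esub> H \<otimes>\<^bsub>W\<^esub> inv\<^bsub>W\<^esub> w)) x"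

definition conj_act :: "'g monoid \<Rightarrow> ('g \<Rightarrow> 'w) \<Rightarrow> 'w \<Rightarrow> 'g \<Rightarrow> 'g" where
  "conj_act G p w t = (let g = (SOME g. g \<in> carrier G \<and> p g = w) in g \<otimes>\<^bsub>G\<^esub> t \<otimes>\<^bsub>G\<^esub> inv\<^bsub>G\<^esub> g)"

end

theory Submission
  imports Defs
begin

lemma (in group) gcancel1[simp]: "x \<in> carrier G \<Longrightarrow> y \<in> carrier G \<Longrightarrow> inv x \<otimes> (x \<otimes> y) = y"
  by (simp add: m_assoc[symmetric])
lemma (in group) gcancel2[simp]: "x \<in> carrier G \<Longrightarrow> y \<in> carrier G \<Longrightarrow> x \<otimes> (inv x \<otimes> y) = y"
  by (simp add: m_assoc[symmetric])

definition tr_grp :: "('a,'c) monoid_scheme \<Rightarrow> ('a \<Rightarrow> 'b) \<Rightarrow> 'b monoid" where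
  "tr_grp G e = \<lparr>carrier = e ` carrier G,
     monoid.mult = (\<lambda>a b. e (inv_into (carrier G) e a \<otimes>\<^bsub>G\<^esub> inv_into (carrier G) e b)), one = e \<one>\<^bsub>G\<^esub>\<rparr>"

lemma tr_grp:
  fixes G :: "('a,'c) monoid_scheme" (structure)
  assumes G: "group G" and inj: "inj_on e (carrier G)"
  shows "group (tr_grp G e)" "e \<in> hom G (tr_grp G e)"
proof -
  interpret group G by (rule G)
  have d[simp]: "inv_into (carrier G) e (e x) = x" if "x \<in> carrier G" for x
    using inj that by simp
  show "group (tr_grp G e)"
  proof (rule groupI)
    fix x assume "x \<in> carrier (tr_grp G e)"
    then obtain a where a: "a \<in> carrier G" "x = e a" by (auto simp: tr_grp_def)
    show "\<exists>y\<in>carrier (tr_grp G e). y \<otimes>\<^bsub>tr_grp G e\<^esub> x = \<one>\<^bsub>tr_grp G e\<^esub>"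
      using a by (intro bexI[of _ "e (inv a)"]) (auto simp: tr_grp_def)
  qed (auto simp: tr_grp_def m_assoc)
  show "e \<in> hom G (tr_grp G e)"
    by (rule homI) (auto simp: tr_grp_def)
qed

fun alt :: "'a \<Rightarrow> 'a \<Rightarrow> nat \<Rightarrow> 'a list" where
  "alt a b 0 = []"
| "alt a b (Suc n) = a # alt b a n"

lemma alt_set: "set (alt a b n) \<subseteq> {a, b}"
  by (induction n arbitrary: a b) auto

lemma alt_len[simp]: "length (alt a b n) = n"
  by (induction n arbitrary: a b) auto

lemma alt_SS: "alt a b (Suc (Suc n)) = a # b # alt a b n" by simp
lemma alt_2Suc: "alt a b (2 * Suc k) = a # b # alt a b (2 * k)"
proof -
  have "2 * Suc k = Suc (Suc (2 * k))" by simp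
  then show ?thesis by (simp only: alt_SS)
qed

lemma card_double:
  assumes "\<And>i. P (i + m) = P i"
  shows "card {i. i < 2 * m \<and> P i} = 2 * card {i::nat. i < m \<and> P i}"
proof -
  have "{i. i < 2 * m \<and> P i} = {i. i < m \<and> P i} \<union> (\<lambda>i. i + m) ` {i. i < m \<and> P i}"
  proof (intro equalityI subsetI)
    fix x assume x: "x \<in> {i. i < 2 * m \<and> P i}"
    show "x \<in> {i. i < m \<and> P i} \<union> (\<lambda>i. i + m) ` {i. i < m \<and> P i}"
    proof (cases "x < m")
      case False
      then have "x = (x - m) + m" by simp
      moreover have "P (x - m)" using assms[of "x - m"] x False by simp
      ultimately show ?thesis using x False by (auto intro!: image_eqI[of _ _ "x - m"])
    qed (use x in auto)
  qed (auto simp: assms)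
  moreover have "{i. i < m \<and> P i} \<inter> (\<lambda>i. i + m) ` {i. i < m \<and> P i} = {}" by auto
  ultimately show ?thesis by (simp add: card_Un_disjoint card_image)
qed

definition code :: "'a \<times> bool \<Rightarrow> 'a \<times> bool \<Rightarrow> 'a list" where
  "code a b = fst a # fst b # replicate (2 * (if snd a then 1 else 0) + (if snd b then 1 else 0)) (fst a)"

lemma code_inj: "code a b = code c d \<Longrightarrow> a = c \<and> b = d"
proof -
  assume h: "code a b = code c d"
  hence "length (code a b) = length (code c d)" by simp
  hence l: "2 * (if snd a then 1 else 0) + (if snd b then 1 else 0) = 2 * (if snd c then 1 else 0) + (if snd d then (1::nat) else 0)"
    by (simp add: code_def)
  have "snd a = snd c \<and> snd b = snd d" using l by (auto split: if_splits)
  moreover have "fst a = fst c" "fst b = fst d" using h by (auto simp: code_def)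
  ultimately show ?thesis by (simp add: prod_eq_iff)
qed

definition enc :: "('a \<times> bool) set \<Rightarrow> ('a \<times> bool \<Rightarrow> 'a \<times> bool) \<Rightarrow> 'a list set" where
  "enc A f = (\<lambda>a. code a (f a)) ` A"

lemma enc_inj: "inj_on (enc A) (Bij A)"
proof (rule inj_onI)
  fix f g assume f: "f \<in> Bij A" and g: "g \<in> Bij A" and e: "enc A f = enc A g"
  show "f = g"
  proof (rule extensionalityI[OF Bij_imp_extensional[OF f] Bij_imp_extensional[OF g]])
    fix a assume a: "a \<in> A"
    then have "code a (f a) \<in> enc A g" using e by (auto simp: enc_def)
    then obtain b where "b \<in> A" "code a (f a) = code b (g b)" by (auto simp: enc_def)
    then show "f a = g a" using code_inj by blast
  qed
qed

locale cox = group W for W :: "'w monoid" (structure) +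
  fixes Waff S Om :: "'w set"
  assumes ext: "ext_coxeter W Waff S Om"
begin

abbreviation "V \<equiv> W\<lparr>carrier := Waff\<rparr>"
abbreviation "wp \<equiv> word_prod W"
abbreviation "len \<equiv> aff_len W S"

lemma normal_Waff: "Waff \<lhd> W" using ext by (simp add: ext_coxeter_def)
lemma sub_Waff: "subgroup Waff W" using normal_Waff by (simp add: normal_def)
lemma sub_Om: "subgroup Om W" using ext by (simp add: ext_coxeter_def)
lemma Waff_Om: "Waff \<inter> Om = {\<one>}" using ext by (simp add: ext_coxeter_def)
lemma decomp: "w \<in> carrier W \<Longrightarrow> \<exists>v\<in>Waff. \<exists>u\<in>Om. w = v \<otimes> u" using ext by (simp add: ext_coxeter_def)
lemma cs: "coxeter_system V S" using ext by (simp add: ext_coxeter_def)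
lemma conjS: "u \<in> Om \<Longrightarrow> s \<in> S \<Longrightarrow> u \<otimes> s \<otimes> inv u \<in> S" using ext by (simp add: ext_coxeter_def)
lemma grpV: "group V" using cs by (simp add: coxeter_system_def)
lemma S_Waff: "S \<subseteq> Waff" using cs by (simp add: coxeter_system_def)
lemma S_ne: "s \<in> S \<Longrightarrow> s \<noteq> \<one>" using cs by (simp add: coxeter_system_def)
lemma S_sq: "s \<in> S \<Longrightarrow> s \<otimes> s = \<one>" using cs by (simp add: coxeter_system_def)
lemma gen: "generate V S = Waff" using cs by (simp add: coxeter_system_def)
lemma univ: "group (H :: 'w list set monoid) \<Longrightarrow> f \<in> S \<rightarrow> carrier H \<Longrightarrow>
        (\<forall>s\<in>S. \<forall>t\<in>S. group.ord V (s \<otimes> t) \<noteq> 0 \<longrightarrow>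
            (f s \<otimes>\<^bsub>H\<^esub> f t) [^]\<^bsub>H\<^esub> group.ord V (s \<otimes> t) = \<one>\<^bsub>H\<^esub>)
      \<Longrightarrow> (\<exists>\<phi>\<in>hom V H. \<forall>s\<in>S. \<phi> s = f s)"
  using cs unfolding coxeter_system_def by auto

lemma Waff_carr: "v \<in> Waff \<Longrightarrow> v \<in> carrier W" by (rule subgroup.mem_carrier[OF sub_Waff])
lemma Om_carr: "u \<in> Om \<Longrightarrow> u \<in> carrier W" by (rule subgroup.mem_carrier[OF sub_Om])
lemma S_carr: "s \<in> S \<Longrightarrow> s \<in> carrier W" using S_Waff Waff_carr by auto
lemma S_inv: "s \<in> S \<Longrightarrow> inv s = s" using S_sq S_carr inv_char by metis

lemma cancel1[simp]: "x \<in> carrier W \<Longrightarrow> y \<in> carrier W \<Longrightarrow> inv x \<otimes> (x \<otimes> y) = y"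
  by (simp add: m_assoc[symmetric])
lemma cancel2[simp]: "x \<in> carrier W \<Longrightarrow> y \<in> carrier W \<Longrightarrow> x \<otimes> (inv x \<otimes> y) = y"
  by (simp add: m_assoc[symmetric])
lemma S_cancel[simp]: "s \<in> S \<Longrightarrow> y \<in> carrier W \<Longrightarrow> s \<otimes> (s \<otimes> y) = y"
  by (simp add: m_assoc[symmetric] S_sq S_carr)

lemma inv_V: "v \<in> Waff \<Longrightarrow> inv\<^bsub>V\<^esub> v = inv v"
  by (simp add: group.m_inv_consistent[symmetric] is_group sub_Waff)

lemma wp_Nil[simp]: "wp [] = \<one>" by (simp add: word_prod_def)
lemma wp_Cons[simp]: "wp (x # xs) = x \<otimes> wp xs" by (simp add: word_prod_def)
lemma wp_Waff: "set xs \<subseteq> S \<Longrightarrow> wp xs \<in> Waff"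
proof (induction xs)
  case (Cons a xs)
  then show ?case using S_Waff subgroup.m_closed[OF sub_Waff] by auto
qed (simp add: subgroup.one_closed[OF sub_Waff])
lemma wp_carr[simp]: "set xs \<subseteq> S \<Longrightarrow> wp xs \<in> carrier W"
  using wp_Waff Waff_carr by blast
lemma wp_take_carr[simp]: "set xs \<subseteq> S \<Longrightarrow> wp (take i xs) \<in> carrier W"
  by (meson wp_carr set_take_subset order_trans)
lemma wp_drop_carr[simp]: "set xs \<subseteq> S \<Longrightarrow> wp (drop i xs) \<in> carrier W"
  by (meson wp_carr set_drop_subset order_trans)
lemma nth_carr[simp]: "set xs \<subseteq> S \<Longrightarrow> i < length xs \<Longrightarrow> xs ! i \<in> carrier W"
  using S_carr nth_mem by blast

lemma wp_append: "set xs \<subseteq> S \<Longrightarrow> set ys \<subseteq> S \<Longrightarrow> wp (xs @ ys) = wp xs \<otimes> wp ys"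
  by (induction xs) (auto simp: m_assoc S_carr)
lemma wp_rev: "set xs \<subseteq> S \<Longrightarrow> inv (wp xs) = wp (rev xs)"
proof (induction xs)
  case (Cons x xs)
  then show ?case by (simp add: wp_append inv_mult_group S_carr S_inv)
qed simp

lemma words_gen: "v \<in> Waff \<Longrightarrow> \<exists>xs. set xs \<subseteq> S \<and> wp xs = v"
proof -
  assume "v \<in> Waff"
  hence "v \<in> generate V S" by (simp add: gen)
  thus ?thesis
  proof (induction rule: generate.induct)
    case one
    then show ?case by (rule exI[of _ "[]"]) simp
  next
    case (incl h)
    then show ?case by (intro exI[of _ "[h]"]) (simp add: S_carr)
  next
    case (inv h)
    then show ?case using S_Waff by (intro exI[of _ "[h]"]) (auto simp: inv_V S_inv S_carr)
  next
    case (eng h1 h2)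
    then obtain xs ys where "set xs \<subseteq> S" "wp xs = h1" "set ys \<subseteq> S" "wp ys = h2" by auto
    then show ?case by (intro exI[of _ "xs @ ys"]) (simp add: wp_append)
  qed
qed

lemma len_le: "set xs \<subseteq> S \<Longrightarrow> len (wp xs) \<le> length xs"
  unfolding aff_len_def by (rule Least_le) blast

lemma reduced_ex: "v \<in> Waff \<Longrightarrow> \<exists>xs. reduced_word W S v xs"
proof -
  assume "v \<in> Waff"
  then obtain ys where "set ys \<subseteq> S" "wp ys = v" using words_gen by blast
  hence "\<exists>n xs. length xs = n \<and> set xs \<subseteq> S \<and> wp xs = v" by blast
  hence "\<exists>xs. length xs = len v \<and> set xs \<subseteq> S \<and> wp xs = v"
    unfolding aff_len_def by (rule LeastI_ex)
  thus ?thesis unfolding reduced_word_def by blast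
qed

lemma reducedD: "reduced_word W S v xs \<Longrightarrow> set xs \<subseteq> S \<and> wp xs = v \<and> length xs = len v"
  by (simp add: reduced_word_def)

lemma len_one[simp]: "len \<one> = 0"
  using len_le[of "[]"] by simp

lemma len_inv: "v \<in> Waff \<Longrightarrow> len (inv v) = len v"
proof -
  have le: "len (inv x) \<le> len x" if xW: "x \<in> Waff" for x
  proof -
    obtain xs where "reduced_word W S x xs" using reduced_ex xW by blast
    hence "set xs \<subseteq> S" "wp xs = x" "length xs = len x" by (auto dest: reducedD)
    thus ?thesis using len_le[of "rev xs"] wp_rev by auto
  qed
  assume v: "v \<in> Waff"
  have "inv v \<in> Waff" using v subgroup.m_inv_closed[OF sub_Waff] by blast
  thus ?thesis using le[OF v] le[of "inv v"] v Waff_carr by force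
qed

lemma len0: "v \<in> Waff \<Longrightarrow> len v = 0 \<Longrightarrow> v = \<one>"
  using reduced_ex reducedD by fastforce

lemma len_S: "s \<in> S \<Longrightarrow> len s = 1"
proof -
  assume s: "s \<in> S"
  have "len s \<le> 1" using len_le[of "[s]"] s S_carr by simp
  moreover have "len s \<noteq> 0" using len0 s S_ne S_Waff by blast
  ultimately show ?thesis by simp
qed

lemma len_mult_S: "v \<in> Waff \<Longrightarrow> s \<in> S \<Longrightarrow> len (v \<otimes> s) \<le> len v + 1"
proof -
  assume v: "v \<in> Waff" and s: "s \<in> S"
  obtain xs where "reduced_word W S v xs" using reduced_ex v by blast
  hence xs: "set xs \<subseteq> S" "wp xs = v" "length xs = len v" by (auto dest: reducedD)
  have "wp (xs @ [s]) = v \<otimes> s" using xs s by (simp add: wp_append S_carr)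
  thus ?thesis using len_le[of "xs @ [s]"] xs s by auto
qed

lemma len_S_mult: "v \<in> Waff \<Longrightarrow> s \<in> S \<Longrightarrow> len (s \<otimes> v) \<le> len v + 1"
proof -
  assume v: "v \<in> Waff" and s: "s \<in> S"
  obtain xs where "reduced_word W S v xs" using reduced_ex v by blast
  hence xs: "set xs \<subseteq> S" "wp xs = v" "length xs = len v" by (auto dest: reducedD)
  have "wp (s # xs) = s \<otimes> v" using xs s by simp
  thus ?thesis using len_le[of "s # xs"] xs s by auto
qed

subsection \<open>Reflections\<close>

abbreviation "R \<equiv> hyperplanes W Waff S"

lemma R_def': "r \<in> R \<longleftrightarrow> (\<exists>v s. r = v \<otimes> s \<otimes> inv v \<and> v \<in> Waff \<and> s \<in> S)"
  by (auto simp: hyperplanes_def)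

lemma R_Waff: "r \<in> R \<Longrightarrow> r \<in> Waff"
  using S_Waff by (auto simp: R_def' intro!: subgroup.m_closed[OF sub_Waff] subgroup.m_inv_closed[OF sub_Waff])

lemma R_carr: "r \<in> R \<Longrightarrow> r \<in> carrier W" using R_Waff Waff_carr by blast

lemma R_sq: "r \<in> R \<Longrightarrow> r \<otimes> r = \<one>"
proof -
  assume "r \<in> R"
  then obtain v s where r: "r = v \<otimes> s \<otimes> inv v" "v \<in> Waff" "s \<in> S" by (auto simp: R_def')
  have c: "v \<in> carrier W" "s \<in> carrier W" using r Waff_carr S_carr by auto
  show ?thesis using c r by (simp add: m_assoc)
qed

lemma R_inv: "r \<in> R \<Longrightarrow> inv r = r"
  using R_sq R_carr inv_char by metis

lemma S_R: "s \<in> S \<Longrightarrow> s \<in> R"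
  unfolding R_def' by (rule exI[of _ \<one>], rule exI[of _ s]) (simp add: S_carr subgroup.one_closed[OF sub_Waff])

lemma R_conj: "x \<in> Waff \<Longrightarrow> r \<in> R \<Longrightarrow> x \<otimes> r \<otimes> inv x \<in> R"
proof -
  assume x: "x \<in> Waff" and "r \<in> R"
  then obtain v s where r: "r = v \<otimes> s \<otimes> inv v" "v \<in> Waff" "s \<in> S" by (auto simp: R_def')
  have c: "v \<in> carrier W" "s \<in> carrier W" "x \<in> carrier W" using r x Waff_carr S_carr by auto
  have "x \<otimes> r \<otimes> inv x = (x \<otimes> v) \<otimes> s \<otimes> inv (x \<otimes> v)" using c r by (simp add: m_assoc inv_mult_group)
  moreover have "x \<otimes> v \<in> Waff" using x r subgroup.m_closed[OF sub_Waff] by blast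
  ultimately show ?thesis using r unfolding R_def' by blast
qed

definition tref :: "'w list \<Rightarrow> nat \<Rightarrow> 'w" where
  "tref xs i = wp (take i xs) \<otimes> xs ! i \<otimes> inv (wp (take i xs))"

definition ncnt :: "'w list \<Rightarrow> 'w \<Rightarrow> nat" where
  "ncnt xs r = card {i. i < length xs \<and> tref xs i = r}"

lemma tref_R: "set xs \<subseteq> S \<Longrightarrow> i < length xs \<Longrightarrow> tref xs i \<in> R"
  unfolding tref_def R_def' using wp_Waff[of "take i xs"]
  by (metis in_set_takeD nth_mem subset_code(1))

lemma tref_Cons0: "x \<in> S \<Longrightarrow> tref (x # xs) 0 = x"
  by (simp add: tref_def S_carr)

lemma tref_Cons: "x \<in> S \<Longrightarrow> set xs \<subseteq> S \<Longrightarrow> i < length xs \<Longrightarrow> tref (x # xs) (Suc i) = x \<otimes> tref xs i \<otimes> x"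
proof -
  assume x: "x \<in> S" and xs: "set xs \<subseteq> S" and i: "i < length xs"
  have c: "wp (take i xs) \<in> carrier W" "xs ! i \<in> carrier W" "x \<in> carrier W"
    using xs i x by (auto simp: S_carr intro: wp_carr order.trans[OF set_take_subset] dest: nth_mem)
  show ?thesis unfolding tref_def using c x
    by (simp add: inv_mult_group S_inv m_assoc)
qed

lemma ncnt_Cons:
  assumes x: "x \<in> S" and xs: "set xs \<subseteq> S" and r: "r \<in> carrier W"
  shows "ncnt (x # xs) r = (if r = x then 1 else 0) + ncnt xs (x \<otimes> r \<otimes> x)"
proof -
  have xc: "x \<in> carrier W" using x S_carr by auto
  have eq: "(tref (x # xs) (Suc i) = r) \<longleftrightarrow> (tref xs i = x \<otimes> r \<otimes> x)" if "i < length xs" for i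
  proof -
    have t: "tref xs i \<in> carrier W" using tref_R[OF xs that] R_carr by blast
    have "x \<otimes> (x \<otimes> r \<otimes> x) \<otimes> x = r" using xc r x by (simp add: m_assoc S_sq[OF x])
    moreover have "x \<otimes> (x \<otimes> tref xs i \<otimes> x) \<otimes> x = tref xs i" using xc t x by (simp add: m_assoc S_sq[OF x])
    ultimately show ?thesis using tref_Cons[OF x xs that] by metis
  qed
  have "{i. i < length (x # xs) \<and> tref (x # xs) i = r} =
        (if r = x then {0} else {}) \<union> Suc ` {i. i < length xs \<and> tref xs i = x \<otimes> r \<otimes> x}"
    (is "?L = ?R")
  proof
    show "?L \<subseteq> ?R"
    proof
      fix i assume "i \<in> ?L"
      then show "i \<in> ?R" using eq tref_Cons0[OF x] by (cases i) auto
    qed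
    show "?R \<subseteq> ?L" using eq tref_Cons0[OF x] by (auto split: if_splits)
  qed
  moreover have "0 \<notin> Suc ` A" for A by auto
  ultimately show ?thesis unfolding ncnt_def
    by (simp add: card_image)
qed

definition step :: "'w \<Rightarrow> 'w \<times> bool \<Rightarrow> 'w \<times> bool" where
  "step x a = (x \<otimes> fst a \<otimes> x, snd a \<noteq> (fst a = x))"

definition Ucomp :: "'w list \<Rightarrow> 'w \<times> bool \<Rightarrow> 'w \<times> bool" where
  "Ucomp xs a = foldl (\<lambda>a x. step x a) a xs"

lemma Ucomp_Nil[simp]: "Ucomp [] a = a" by (simp add: Ucomp_def)
lemma Ucomp_Cons[simp]: "Ucomp (x # xs) a = Ucomp xs (step x a)" by (simp add: Ucomp_def)

lemma Ucomp_formula: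
  "set xs \<subseteq> S \<Longrightarrow> r \<in> carrier W \<Longrightarrow>
     Ucomp xs (r, e) = (inv (wp xs) \<otimes> r \<otimes> wp xs, e \<noteq> odd (ncnt xs r))"
proof (induction xs arbitrary: r e)
  case Nil
  then show ?case by (simp add: ncnt_def)
next
  case (Cons x xs)
  have x: "x \<in> S" and xs: "set xs \<subseteq> S" using Cons by auto
  have xc: "x \<in> carrier W" using x S_carr by auto
  have rc: "x \<otimes> r \<otimes> x \<in> carrier W" using xc Cons by auto
  have "Ucomp (x # xs) (r, e) = Ucomp xs (x \<otimes> r \<otimes> x, e \<noteq> (r = x))" by (simp add: step_def)
  also have "\<dots> = (inv (wp xs) \<otimes> (x \<otimes> r \<otimes> x) \<otimes> wp xs, (e \<noteq> (r = x)) \<noteq> odd (ncnt xs (x \<otimes> r \<otimes> x)))"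
    using Cons.IH[OF xs rc] by simp
  also have "inv (wp xs) \<otimes> (x \<otimes> r \<otimes> x) \<otimes> wp xs = inv (wp (x # xs)) \<otimes> r \<otimes> wp (x # xs)"
    using xc xs Cons.prems by (simp add: inv_mult_group S_inv[OF x] m_assoc)
  also have "((e \<noteq> (r = x)) \<noteq> odd (ncnt xs (x \<otimes> r \<otimes> x))) = (e \<noteq> odd (ncnt (x # xs) r))"
    using ncnt_Cons[OF x xs Cons.prems(2)] by auto
  finally show ?case .
qed

lemma pow_comm_alt: "a \<in> carrier W \<Longrightarrow> b \<in> carrier W \<Longrightarrow> a \<otimes> (b \<otimes> a) [^] (k::nat) = (a \<otimes> b) [^] k \<otimes> a"
proof (induction k)
  case (Suc k)
  have "a \<otimes> (b \<otimes> a) [^] Suc k = (a \<otimes> (b \<otimes> a) [^] k) \<otimes> (b \<otimes> a)"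
    using Suc.prems by (simp add: m_assoc)
  also have "\<dots> = (a \<otimes> b) [^] k \<otimes> (a \<otimes> b) \<otimes> a" using Suc by (simp add: m_assoc)
  finally show ?case by simp
qed simp

lemma tref_alt: "a \<in> S \<Longrightarrow> b \<in> S \<Longrightarrow> i < n \<Longrightarrow> tref (alt a b n) i = (a \<otimes> b) [^] i \<otimes> a"
proof (induction n arbitrary: a b i)
  case 0
  then show ?case by simp
next
  case (Suc n)
  have ca: "a \<in> carrier W" "b \<in> carrier W" using Suc.prems S_carr by auto
  have st: "set (alt b a n) \<subseteq> S" using alt_set[of b a n] Suc.prems by auto
  show ?case
  proof (cases i)
    case 0
    then show ?thesis using Suc.prems ca by (simp add: tref_Cons0)
  next
    case (Suc j)
    with Suc.prems have j: "j < n" by simp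
    have "tref (alt a b (Suc n)) i = a \<otimes> tref (alt b a n) j \<otimes> a"
      using tref_Cons[OF Suc.prems(1) st] j Suc by simp
    also have "\<dots> = a \<otimes> ((b \<otimes> a) [^] j \<otimes> b) \<otimes> a" using Suc.IH[OF Suc.prems(2,1) j] by simp
    also have "\<dots> = (a \<otimes> (b \<otimes> a) [^] j) \<otimes> b \<otimes> a" using ca by (simp add: m_assoc)
    also have "\<dots> = (a \<otimes> b) [^] j \<otimes> (a \<otimes> b) \<otimes> a" using ca by (simp add: pow_comm_alt m_assoc)
    finally show ?thesis using Suc ca by simp
  qed
qed

lemma wp_alt2: "a \<in> S \<Longrightarrow> b \<in> S \<Longrightarrow> wp (alt a b (2 * k)) = (a \<otimes> b) [^] k"
proof (induction k)
  case (Suc k)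
  have ca: "a \<in> carrier W" "b \<in> carrier W" using Suc.prems S_carr by auto
  have "alt a b (2 * Suc k) = a # b # alt a b (2 * k)" by (rule alt_2Suc)
  then have "wp (alt a b (2 * Suc k)) = (a \<otimes> b) \<otimes> (a \<otimes> b) [^] k" using Suc ca by (simp add: m_assoc)
  also have "\<dots> = (a \<otimes> b) [^] Suc k" using ca by (rule nat_pow_Suc2[symmetric, OF m_closed])
  finally show ?case .
qed simp

lemma ncnt_alt_even:
  assumes a: "a \<in> S" and b: "b \<in> S" and m: "(a \<otimes> b) [^] m = \<one>"
  shows "even (ncnt (alt a b (2 * m)) r)"
proof -
  have ca: "a \<in> carrier W" "b \<in> carrier W" using a b S_carr by auto
  have "ncnt (alt a b (2 * m)) r = card {i. i < 2 * m \<and> (a \<otimes> b) [^] i \<otimes> a = r}"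
    unfolding ncnt_def using tref_alt[OF a b] by (metis (lifting) alt_len)
  also have "\<dots> = 2 * card {i. i < m \<and> (a \<otimes> b) [^] i \<otimes> a = r}"
  proof (rule card_double)
    fix i
    have "(a \<otimes> b) [^] (i + m) = (a \<otimes> b) [^] i" using ca m by (simp add: nat_pow_mult[symmetric])
    then show "((a \<otimes> b) [^] (i + m) \<otimes> a = r) = ((a \<otimes> b) [^] i \<otimes> a = r)" by simp
  qed
  finally show ?thesis by simp
qed

subsection \<open>The reflection representation\<close>

abbreviation "AA \<equiv> R \<times> (UNIV :: bool set)"

definition Us :: "'w \<Rightarrow> 'w \<times> bool \<Rightarrow> 'w \<times> bool" where
  "Us x = restrict (step x) AA"

lemma step_AA: "x \<in> S \<Longrightarrow> a \<in> AA \<Longrightarrow> step x a \<in> AA"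
  using R_conj[of x "fst a"] S_Waff S_inv by (auto simp: step_def)

lemma step_AA2: "s \<in> S \<Longrightarrow> t \<in> S \<Longrightarrow> a \<in> AA \<Longrightarrow> step s (step t a) \<in> AA"
  using step_AA by blast

lemma step_step: "x \<in> S \<Longrightarrow> a \<in> AA \<Longrightarrow> step x (step x a) = a"
proof -
  assume x: "x \<in> S" and a: "a \<in> AA"
  have c: "x \<in> carrier W" "fst a \<in> carrier W" using x a S_carr R_carr by auto
  have e1: "x \<otimes> (x \<otimes> fst a \<otimes> x) \<otimes> x = fst a" using c x by (simp add: m_assoc S_sq)
  have e2: "(x \<otimes> fst a \<otimes> x = x) = (fst a = x)"
    using c x by (metis S_sq e1 m_assoc r_one)
  show ?thesis unfolding step_def using e1 e2 by (auto simp: prod_eq_iff)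
qed

lemma Us_Bij: "x \<in> S \<Longrightarrow> Us x \<in> Bij AA"
  unfolding Bij_def Us_def
  by (auto intro!: bij_betwI[where g = "restrict (step x) AA"] simp: step_AA step_step)

lemma Ucomp_AA: "set xs \<subseteq> S \<Longrightarrow> a \<in> AA \<Longrightarrow> Ucomp xs a \<in> AA"
  by (induction xs arbitrary: a) (auto simp: step_AA)

lemma Bij_pow:
  assumes s: "s \<in> S" and t: "t \<in> S"
  shows "(Us s \<otimes>\<^bsub>BijGroup AA\<^esub> Us t) [^]\<^bsub>BijGroup AA\<^esub> k = restrict (Ucomp (alt t s (2 * k))) AA"
proof (induction k)
  case 0
  then show ?case by (simp add: BijGroup_def)
next
  case (Suc k)
  have st: "set (alt t s n) \<subseteq> S" for n using alt_set[of t s n] s t by auto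
  have X: "Us s \<otimes>\<^bsub>BijGroup AA\<^esub> Us t = restrict (\<lambda>a. step s (step t a)) AA"
    using Us_Bij[OF s] Us_Bij[OF t] step_AA[OF t]
    by (auto simp: BijGroup_def compose_def Us_def)
  have B: "restrict (Ucomp (alt t s (2 * k))) AA \<in> Bij AA"
    using Suc.IH[symmetric] monoid.nat_pow_closed[OF group.is_monoid[OF group_BijGroup]] Us_Bij s t
      monoid.m_closed[OF group.is_monoid[OF group_BijGroup]]
    by (metis (no_types, lifting) partial_object.select_convs(1) BijGroup_def)
  have XB: "restrict (\<lambda>a. step s (step t a)) AA \<in> Bij AA"
    using X Us_Bij s t monoid.m_closed[OF group.is_monoid[OF group_BijGroup]]
    by (metis (no_types, lifting) partial_object.select_convs(1) BijGroup_def)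
  have "(Us s \<otimes>\<^bsub>BijGroup AA\<^esub> Us t) [^]\<^bsub>BijGroup AA\<^esub> Suc k
      = restrict (Ucomp (alt t s (2 * k))) AA \<otimes>\<^bsub>BijGroup AA\<^esub> restrict (\<lambda>a. step s (step t a)) AA"
    by (subst monoid.nat_pow_Suc[OF group.is_monoid[OF group_BijGroup]]) (simp only: Suc.IH[unfolded X] X)
  also have "\<dots> = restrict (Ucomp (alt t s (2 * Suc k))) AA"
    using B XB step_AA2[OF s t] s t by (auto simp: BijGroup_def compose_def alt_2Suc intro!: restrict_ext)
  finally show ?case .
qed

lemma V_ord_rel:
  assumes s: "s \<in> S" and t: "t \<in> S"
  shows "(s \<otimes> t) [^] group.ord V (s \<otimes> t) = \<one>"
proof -
  have "s \<otimes> t \<in> Waff" using s t S_Waff subgroup.m_closed[OF sub_Waff] by blast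
  then have "(s \<otimes> t) [^]\<^bsub>V\<^esub> group.ord V (s \<otimes> t) = \<one>\<^bsub>V\<^esub>"
    using group.pow_ord_eq_1[OF grpV] by simp
  then show ?thesis using nat_pow_consistent[of "s \<otimes> t" "group.ord V (s \<otimes> t)" Waff] by simp
qed

lemma swap_rel:
  assumes s: "s \<in> S" and t: "t \<in> S" and m: "(s \<otimes> t) [^] (m::nat) = \<one>"
  shows "(t \<otimes> s) [^] m = \<one>"
proof -
  have c: "s \<in> carrier W" "t \<in> carrier W" using s t S_carr by auto
  have "t = t \<otimes> (s \<otimes> t) [^] m" using m c by simp
  also have "\<dots> = (t \<otimes> s) [^] m \<otimes> t" using c by (simp add: pow_comm_alt)
  finally have "\<one> \<otimes> t = (t \<otimes> s) [^] m \<otimes> t" using c by simp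
  then show ?thesis using c r_cancel[of t "\<one>" "(t \<otimes> s) [^] m"] by simp
qed

lemma Bij_rel:
  assumes s: "s \<in> S" and t: "t \<in> S" and m: "(s \<otimes> t) [^] (m::nat) = \<one>"
  shows "(Us s \<otimes>\<^bsub>BijGroup AA\<^esub> Us t) [^]\<^bsub>BijGroup AA\<^esub> m = \<one>\<^bsub>BijGroup AA\<^esub>"
proof -
  have st: "set (alt t s n) \<subseteq> S" for n using alt_set[of t s n] s t by auto
  have P: "wp (alt t s (2 * m)) = \<one>" using wp_alt2[OF t s] swap_rel[OF s t m] by simp
  have "restrict (Ucomp (alt t s (2 * m))) AA = restrict (\<lambda>x. x) AA"
  proof (rule restrict_ext)
    fix a assume a: "a \<in> AA"
    obtain r e where re: "a = (r, e)" by fastforce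
    have "r \<in> carrier W" using a re R_carr by auto
    then show "Ucomp (alt t s (2 * m)) a = a"
      using Ucomp_formula[OF st] ncnt_alt_even[OF t s swap_rel[OF s t m]] P re by simp
  qed
  then show ?thesis using Bij_pow[OF s t] by (simp add: BijGroup_def)
qed

abbreviation "BB \<equiv> BijGroup AA"
abbreviation "HH \<equiv> tr_grp BB (enc AA)"

lemma carr_BB[simp]: "carrier BB = Bij AA" by (simp add: BijGroup_def)
lemma grpHH: "group HH" using tr_grp(1)[OF group_BijGroup, of "enc AA" AA] enc_inj[of AA] by simp
lemma homHH: "enc AA \<in> hom BB HH" using tr_grp(2)[OF group_BijGroup, of "enc AA" AA] enc_inj[of AA] by simp
lemma carr_HH: "carrier HH = enc AA ` Bij AA" by (simp add: tr_grp_def)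
lemma dec_enc[simp]: "f \<in> Bij AA \<Longrightarrow> inv_into (Bij AA) (enc AA) (enc AA f) = f"
  by (rule inv_into_f_f[OF enc_inj])
lemma mult_HH: "a \<in> carrier HH \<Longrightarrow> b \<in> carrier HH \<Longrightarrow>
   a \<otimes>\<^bsub>HH\<^esub> b = enc AA (inv_into (Bij AA) (enc AA) a \<otimes>\<^bsub>BB\<^esub> inv_into (Bij AA) (enc AA) b)"
  by (simp add: tr_grp_def)
lemma one_HH: "\<one>\<^bsub>HH\<^esub> = enc AA \<one>\<^bsub>BB\<^esub>" by (simp add: tr_grp_def)

lemma Phi_ex: "\<exists>\<phi>\<in>hom V HH. \<forall>s\<in>S. \<phi> s = enc AA (Us s)"
proof (rule univ[OF grpHH])
  show "(\<lambda>x. enc AA (Us x)) \<in> S \<rightarrow> carrier HH" using Us_Bij by (auto simp: carr_HH)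
  show "\<forall>s\<in>S. \<forall>t\<in>S. group.ord V (s \<otimes> t) \<noteq> 0 \<longrightarrow>
     (enc AA (Us s) \<otimes>\<^bsub>HH\<^esub> enc AA (Us t)) [^]\<^bsub>HH\<^esub> group.ord V (s \<otimes> t) = \<one>\<^bsub>HH\<^esub>"
  proof (intro ballI impI)
    fix s t assume s: "s \<in> S" and t: "t \<in> S"
    let ?m = "group.ord V (s \<otimes> t)"
    have c: "Us s \<in> carrier BB" "Us t \<in> carrier BB" using Us_Bij s t by auto
    have cc: "Us s \<otimes>\<^bsub>BB\<^esub> Us t \<in> carrier BB"
      using c monoid.m_closed[OF group.is_monoid[OF group_BijGroup]] by blast
    have 1: "enc AA (Us s) \<otimes>\<^bsub>HH\<^esub> enc AA (Us t) = enc AA (Us s \<otimes>\<^bsub>BB\<^esub> Us t)"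
      using homHH c by (simp add: hom_mult)
    have 2: "(enc AA (Us s \<otimes>\<^bsub>BB\<^esub> Us t)) [^]\<^bsub>HH\<^esub> ?m = enc AA ((Us s \<otimes>\<^bsub>BB\<^esub> Us t) [^]\<^bsub>BB\<^esub> ?m)"
      using hom_nat_pow[OF homHH cc group_BijGroup grpHH] by simp
    have 3: "enc AA ((Us s \<otimes>\<^bsub>BB\<^esub> Us t) [^]\<^bsub>BB\<^esub> ?m) = enc AA \<one>\<^bsub>BB\<^esub>" using Bij_rel[OF s t V_ord_rel[OF s t]] by simp
    from 1 2 3 show "(enc AA (Us s) \<otimes>\<^bsub>HH\<^esub> enc AA (Us t)) [^]\<^bsub>HH\<^esub> ?m = \<one>\<^bsub>HH\<^esub>"
      by (simp add: one_HH)
  qed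
qed

definition "Phi = (SOME \<phi>. \<phi> \<in> hom V HH \<and> (\<forall>s\<in>S. \<phi> s = enc AA (Us s)))"
definition "Ub v = inv_into (Bij AA) (enc AA) (Phi v)"

lemma Phi: "Phi \<in> hom V HH" "\<And>s. s \<in> S \<Longrightarrow> Phi s = enc AA (Us s)"
  using someI_ex[OF Phi_ex[unfolded Bex_def]] unfolding Phi_def by auto

lemma Ub_Bij: "v \<in> Waff \<Longrightarrow> Ub v \<in> Bij AA \<and> enc AA (Ub v) = Phi v"
proof -
  assume v: "v \<in> Waff"
  have "Phi v \<in> carrier HH" using Phi(1) v by (auto simp: hom_def)
  then obtain f where "f \<in> Bij AA" "Phi v = enc AA f" by (auto simp: carr_HH)
  then show ?thesis by (simp add: Ub_def)
qed

lemma Ub_mult: "x \<in> Waff \<Longrightarrow> y \<in> Waff \<Longrightarrow> Ub (x \<otimes> y) = Ub x \<otimes>\<^bsub>BB\<^esub> Ub y"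
proof -
  assume x: "x \<in> Waff" and y: "y \<in> Waff"
  have "Phi (x \<otimes> y) = Phi x \<otimes>\<^bsub>HH\<^esub> Phi y" using Phi(1) x y hom_mult[of Phi V HH x y] by simp
  also have "\<dots> = enc AA (Ub x \<otimes>\<^bsub>BB\<^esub> Ub y)"
    using mult_HH[of "Phi x" "Phi y"] Phi(1) x y by (simp add: Ub_def hom_def Pi_def)
  finally have "Ub (x \<otimes> y) = inv_into (Bij AA) (enc AA) (enc AA (Ub x \<otimes>\<^bsub>BB\<^esub> Ub y))" by (simp add: Ub_def)
  moreover have "Ub x \<otimes>\<^bsub>BB\<^esub> Ub y \<in> Bij AA"
    using Ub_Bij[OF x] Ub_Bij[OF y] monoid.m_closed[OF group.is_monoid[OF group_BijGroup], of "Ub x" AA "Ub y"] by simp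
  ultimately show ?thesis by simp
qed

lemma Ub_one: "Ub \<one> = \<one>\<^bsub>BB\<^esub>"
proof -
  have gh: "group_hom V HH Phi" by (simp add: group_hom_def group_hom_axioms_def grpV grpHH Phi(1))
  have "Phi \<one>\<^bsub>V\<^esub> = \<one>\<^bsub>HH\<^esub>" by (rule group_hom.hom_one[OF gh])
  then have "Phi \<one> = enc AA \<one>\<^bsub>BB\<^esub>" by (simp add: one_HH)
  moreover have "\<one>\<^bsub>BB\<^esub> \<in> Bij AA" using monoid.one_closed[OF group.is_monoid[OF group_BijGroup], of AA] by simp
  ultimately show ?thesis by (simp add: Ub_def)
qed

lemma Ub_S: "s \<in> S \<Longrightarrow> Ub s = Us s"
  using Phi(2) Us_Bij by (simp add: Ub_def)

lemma Ub_wp: "set xs \<subseteq> S \<Longrightarrow> a \<in> AA \<Longrightarrow> Ub (wp (rev xs)) a = Ucomp xs a"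
proof (induction xs arbitrary: a)
  case Nil
  then show ?case by (simp add: Ub_one BijGroup_def)
next
  case (Cons x xs)
  have x: "x \<in> S" and xs: "set xs \<subseteq> S" using Cons.prems by auto
  have "wp (rev (x # xs)) = wp (rev xs) \<otimes> x" using x xs by (simp add: wp_append S_carr)
  then have "Ub (wp (rev (x # xs))) = Ub (wp (rev xs)) \<otimes>\<^bsub>BB\<^esub> Us x"
    using Ub_mult[of "wp (rev xs)" x] wp_Waff[of "rev xs"] xs x S_Waff Ub_S by auto
  also have "\<dots> = compose AA (Ub (wp (rev xs))) (Us x)"
    using Ub_Bij[of "wp (rev xs)"] wp_Waff[of "rev xs"] xs Us_Bij[OF x] by (simp add: BijGroup_def)
  finally show ?case using Cons.IH[OF xs] step_AA[OF x Cons.prems(2)] Cons.prems(2)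
    by (simp add: compose_def Us_def)
qed

theorem ncnt_parity:
  assumes xs: "set xs \<subseteq> S" and ys: "set ys \<subseteq> S" and eq: "wp xs = wp ys" and r: "r \<in> R"
  shows "odd (ncnt xs r) = odd (ncnt ys r)"
proof -
  have "wp (rev xs) = wp (rev ys)" using wp_rev xs ys eq by metis
  then have "Ucomp xs (r, False) = Ucomp ys (r, False)"
    using Ub_wp[OF xs, of "(r, False)"] Ub_wp[OF ys, of "(r, False)"] r by simp
  then show ?thesis using Ucomp_formula[OF xs] Ucomp_formula[OF ys] r R_carr by simp
qed

subsection \<open>The function eta and the exchange condition\<close>

definition eta :: "'w \<Rightarrow> 'w \<Rightarrow> bool" where
  "eta v r = odd (ncnt (SOME xs. set xs \<subseteq> S \<and> wp xs = v) r)"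

lemma eta_word: "set xs \<subseteq> S \<Longrightarrow> r \<in> R \<Longrightarrow> eta (wp xs) r = odd (ncnt xs r)"
proof -
  assume xs: "set xs \<subseteq> S" and r: "r \<in> R"
  let ?ys = "SOME ys. set ys \<subseteq> S \<and> wp ys = wp xs"
  have "set ?ys \<subseteq> S \<and> wp ?ys = wp xs" using someI[of "\<lambda>ys. set ys \<subseteq> S \<and> wp ys = wp xs" xs] xs by blast
  then show ?thesis unfolding eta_def using ncnt_parity[OF _ xs _ r] by blast
qed

lemma ncnt_append:
  "set xs \<subseteq> S \<Longrightarrow> set ys \<subseteq> S \<Longrightarrow> r \<in> carrier W \<Longrightarrow>
    ncnt (xs @ ys) r = ncnt xs r + ncnt ys (inv (wp xs) \<otimes> r \<otimes> wp xs)"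
proof (induction xs arbitrary: r)
  case Nil
  then show ?case by (simp add: ncnt_def)
next
  case (Cons x xs)
  have x: "x \<in> S" and xs: "set xs \<subseteq> S" using Cons.prems by auto
  have xc: "x \<in> carrier W" using x S_carr by auto
  have rc: "x \<otimes> r \<otimes> x \<in> carrier W" using xc Cons.prems by auto
  have "ncnt ((x # xs) @ ys) r = (if r = x then 1 else 0) + ncnt (xs @ ys) (x \<otimes> r \<otimes> x)"
    using ncnt_Cons[OF x _ Cons.prems(3), of "xs @ ys"] xs Cons.prems(2) by simp
  also have "\<dots> = (if r = x then 1 else 0) + ncnt xs (x \<otimes> r \<otimes> x) + ncnt ys (inv (wp xs) \<otimes> (x \<otimes> r \<otimes> x) \<otimes> wp xs)"
    using Cons.IH[OF xs Cons.prems(2) rc] by simp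
  also have "inv (wp xs) \<otimes> (x \<otimes> r \<otimes> x) \<otimes> wp xs = inv (wp (x # xs)) \<otimes> r \<otimes> wp (x # xs)"
    using xc xs Cons.prems by (simp add: inv_mult_group S_inv[OF x] m_assoc)
  finally show ?case using ncnt_Cons[OF x xs Cons.prems(3)] by simp
qed

lemma inv_Waff: "x \<in> Waff \<Longrightarrow> inv x \<in> Waff" using subgroup.m_inv_closed[OF sub_Waff] by blast
lemma mult_Waff: "x \<in> Waff \<Longrightarrow> y \<in> Waff \<Longrightarrow> x \<otimes> y \<in> Waff" using subgroup.m_closed[OF sub_Waff] by blast

lemma R_conj': "x \<in> Waff \<Longrightarrow> r \<in> R \<Longrightarrow> inv x \<otimes> r \<otimes> x \<in> R"
  using R_conj[of "inv x" r] inv_Waff Waff_carr by auto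

lemma eta_mult:
  assumes x: "x \<in> Waff" and y: "y \<in> Waff" and r: "r \<in> R"
  shows "eta (x \<otimes> y) r = (eta x r \<noteq> eta y (inv x \<otimes> r \<otimes> x))"
proof -
  obtain xs ys where xs: "set xs \<subseteq> S" "wp xs = x" and ys: "set ys \<subseteq> S" "wp ys = y"
    using words_gen x y by metis
  have "x \<otimes> y = wp (xs @ ys)" using xs ys by (simp add: wp_append)
  then have "eta (x \<otimes> y) r = odd (ncnt (xs @ ys) r)" using eta_word[of "xs @ ys" r] xs ys r by simp
  also have "\<dots> = odd (ncnt xs r + ncnt ys (inv x \<otimes> r \<otimes> x))"
    using ncnt_append[OF xs(1) ys(1)] r R_carr xs by simp
  finally show ?thesis using eta_word[OF xs(1) r] eta_word[OF ys(1) R_conj'[OF x r]] xs ys by simp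
qed

lemma eta_one: "r \<in> R \<Longrightarrow> \<not> eta \<one> r"
  using eta_word[of "[]" r] by (simp add: ncnt_def)

lemma eta_S: "s \<in> S \<Longrightarrow> eta s s"
proof -
  assume s: "s \<in> S"
  have "ncnt [s] s = 1" using ncnt_Cons[OF s, of "[]" s] S_carr s by (simp add: ncnt_def)
  then show ?thesis using eta_word[of "[s]" s] s S_R S_carr by simp
qed

lemma eta_self: "t \<in> R \<Longrightarrow> eta t t"
proof -
  assume t: "t \<in> R"
  then obtain a s where ta: "t = a \<otimes> s \<otimes> inv a" "a \<in> Waff" "s \<in> S" by (auto simp: R_def')
  have c: "a \<in> carrier W" "s \<in> carrier W" using ta Waff_carr S_carr by auto
  have sW: "s \<in> Waff" "s \<in> R" using ta S_Waff S_R by auto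
  have ia: "inv a \<in> Waff" using inv_Waff ta by auto
  have e1: "inv a \<otimes> t \<otimes> a = s" using ta c by (simp add: m_assoc)
  have e2: "inv s \<otimes> s \<otimes> s = s" using c ta by simp
  have "eta (a \<otimes> (s \<otimes> inv a)) t = (eta a t \<noteq> eta (s \<otimes> inv a) s)"
    using eta_mult[OF ta(2) mult_Waff[OF sW(1) ia] t] e1 by simp
  also have "eta (s \<otimes> inv a) s = (eta s s \<noteq> eta (inv a) s)"
    using eta_mult[OF sW(1) ia sW(2)] e2 by simp
  also have "eta a t = eta (inv a) s"
  proof -
    have "eta (a \<otimes> inv a) t = (eta a t \<noteq> eta (inv a) s)" using eta_mult[OF ta(2) ia t] e1 by simp
    moreover have "\<not> eta (a \<otimes> inv a) t" using eta_one t c by simp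
    ultimately show ?thesis by simp
  qed
  finally show ?thesis using ta eta_S[OF ta(3)] c by (simp add: m_assoc)
qed

lemma eta_refl: "t \<in> R \<Longrightarrow> v \<in> Waff \<Longrightarrow> eta (t \<otimes> v) t = (\<not> eta v t)"
  using eta_mult[of t v t] R_Waff eta_self R_inv R_sq R_carr by (simp add: m_assoc)

lemma del_lemma:
  assumes xs: "set xs \<subseteq> S" and i: "i < length xs"
  shows "tref xs i \<otimes> wp xs = wp (take i xs @ drop (Suc i) xs)"
proof -
  have x: "xs ! i \<in> S" using xs i nth_mem by blast
  have "wp xs = wp (take i xs @ xs ! i # drop (Suc i) xs)" using id_take_nth_drop[OF i] by simp
  also have "\<dots> = wp (take i xs) \<otimes> (xs ! i \<otimes> wp (drop (Suc i) xs))"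
    using xs x by (simp add: wp_append order_trans[OF set_take_subset] order_trans[OF set_drop_subset])
  finally have "tref xs i \<otimes> wp xs = wp (take i xs) \<otimes> xs ! i \<otimes> inv (wp (take i xs)) \<otimes> (wp (take i xs) \<otimes> (xs ! i \<otimes> wp (drop (Suc i) xs)))"
    by (simp add: tref_def)
  also have "\<dots> = wp (take i xs) \<otimes> wp (drop (Suc i) xs)" using xs i x by (simp add: m_assoc S_carr)
  finally show ?thesis
    using xs by (simp add: wp_append order_trans[OF set_take_subset] order_trans[OF set_drop_subset])
qed

lemma set_del: "set xs \<subseteq> S \<Longrightarrow> set (take i xs @ drop (Suc i) xs) \<subseteq> S"
  by (auto dest: in_set_takeD in_set_dropD)

lemma len_del: "set xs \<subseteq> S \<Longrightarrow> i < length xs \<Longrightarrow> len (tref xs i \<otimes> wp xs) < length xs"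
proof -
  assume xs: "set xs \<subseteq> S" and i: "i < length xs"
  have "len (tref xs i \<otimes> wp xs) \<le> length (take i xs @ drop (Suc i) xs)"
    using del_lemma[OF xs i] len_le[OF set_del[OF xs]] by simp
  then show ?thesis using i by simp
qed

lemma tref_del: "i < j \<Longrightarrow> j < length xs \<Longrightarrow> tref (take j xs @ drop (Suc j) xs) i = tref xs i"
  by (simp add: tref_def nth_append min_def)

lemma reduced_distinct:
  assumes red: "reduced_word W S v xs" and ij: "i < j" "j < length xs"
  shows "tref xs i \<noteq> tref xs j"
proof
  assume eq: "tref xs i = tref xs j"
  have xs: "set xs \<subseteq> S" "wp xs = v" "length xs = len v" using reducedD[OF red] by auto
  let ?ys = "take j xs @ drop (Suc j) xs"
  have ys: "set ?ys \<subseteq> S" using set_del xs by blast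
  have ly: "length ?ys = length xs - 1" using ij by simp
  define zs where "zs = take i ?ys @ drop (Suc i) ?ys"
  have "tref xs j \<otimes> v = wp ?ys" using del_lemma[OF xs(1) ij(2)] xs by simp
  moreover have "tref ?ys i \<otimes> wp ?ys = wp zs" unfolding zs_def using del_lemma[OF ys] ij ly by simp
  moreover have "tref ?ys i = tref xs j" using tref_del ij eq by simp
  ultimately have 1: "tref xs j \<otimes> (tref xs j \<otimes> v) = wp zs" by simp
  have tR: "tref xs j \<in> R" using tref_R xs ij by simp
  have vc: "v \<in> carrier W" using xs wp_carr by blast
  have "tref xs j \<otimes> (tref xs j \<otimes> v) = v" using tR R_sq[OF tR] R_carr[OF tR] vc by (metis l_one m_assoc)
  with 1 have "v = wp zs" by simp
  moreover have "set zs \<subseteq> S" unfolding zs_def using set_del[OF ys] .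
  ultimately have "len v \<le> length zs" using len_le by simp
  moreover have "length zs = length xs - 2" unfolding zs_def using ij by simp
  ultimately show False using ij xs by simp
qed

lemma eta_reduced:
  assumes red: "reduced_word W S v xs" and r: "r \<in> R"
  shows "eta v r = (\<exists>i<length xs. tref xs i = r)"
proof -
  have xs: "set xs \<subseteq> S" "wp xs = v" using reducedD[OF red] by auto
  let ?A = "{i. i < length xs \<and> tref xs i = r}"
  have le: "card ?A \<le> Suc 0"
    using reduced_distinct[OF red] by (subst card_le_Suc0_iff_eq) (auto, metis linorder_neqE_nat)
  have fin: "finite ?A" by simp
  have c: "card ?A = 0 \<or> card ?A = 1" using le by linarith
  have c1: "?A \<noteq> {} \<Longrightarrow> card ?A = 1" using c card_0_eq[OF fin] by blast
  have c0: "?A = {} \<Longrightarrow> card ?A = 0" by (simp only: card.empty)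
  have odd_eq: "odd (card ?A) = (?A \<noteq> {})" by (metis c0 c1 odd_one even_zero)
  have "eta v r = odd (card ?A)" using eta_word[OF xs(1) r] xs(2) by (simp add: ncnt_def)
  also have "\<dots> = (?A \<noteq> {})" by (rule odd_eq)
  also have "\<dots> = (\<exists>i<length xs. tref xs i = r)" by auto
  finally show ?thesis .
qed

definition Nset :: "'w \<Rightarrow> 'w set" where
  "Nset v = {r \<in> R. len (r \<otimes> v) < len v}"

lemma N_char:
  assumes red: "reduced_word W S v xs" and r: "r \<in> R"
  shows "(r \<in> Nset v) = (\<exists>i<length xs. tref xs i = r)"
proof
  have xs: "set xs \<subseteq> S" "wp xs = v" "length xs = len v" using reducedD[OF red] by auto
  show "\<exists>i<length xs. tref xs i = r \<Longrightarrow> r \<in> Nset v" using len_del[OF xs(1)] xs r by (auto simp: Nset_def)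
  assume N: "r \<in> Nset v"
  show "\<exists>i<length xs. tref xs i = r"
  proof (rule ccontr)
    assume "\<not> (\<exists>i<length xs. tref xs i = r)"
    then have "\<not> eta v r" using eta_reduced[OF red r] by simp
    moreover have v: "v \<in> Waff" using xs wp_Waff by auto
    ultimately have "eta (r \<otimes> v) r" using eta_refl[OF r] by simp
    moreover have rv: "r \<otimes> v \<in> Waff" using v r R_Waff mult_Waff by auto
    moreover obtain ys where ys: "reduced_word W S (r \<otimes> v) ys" using reduced_ex rv by blast
    ultimately obtain j where j: "j < length ys" "tref ys j = r" using eta_reduced[OF ys r] by auto
    have "len (r \<otimes> (r \<otimes> v)) < len (r \<otimes> v)" using len_del[of ys j] j reducedD[OF ys] by auto
    moreover have "r \<otimes> (r \<otimes> v) = v" using r v R_sq R_carr Waff_carr by (simp add: m_assoc[symmetric])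
    ultimately show False using N by (simp add: Nset_def)
  qed
qed

lemma N_tref: "reduced_word W S v xs \<Longrightarrow> Nset v = tref xs ` {..<length xs}"
proof -
  assume red: "reduced_word W S v xs"
  have "tref xs i \<in> R" if "i < length xs" for i using tref_R reducedD[OF red] that by blast
  then show ?thesis using N_char[OF red] by (auto simp: Nset_def[of v] image_iff)
qed

lemma N_eta: "v \<in> Waff \<Longrightarrow> r \<in> R \<Longrightarrow> (r \<in> Nset v) = eta v r"
  using reduced_ex N_char eta_reduced by metis

lemma N_finite: "v \<in> Waff \<Longrightarrow> finite (Nset v)"
  using reduced_ex N_tref by (metis finite_imageI finite_lessThan)

lemma N_sub: "Nset v \<subseteq> R" by (auto simp: Nset_def)

lemma sep_one_N: "v \<in> Waff \<Longrightarrow> sep_one W S v = Nset v"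
proof
  assume v: "v \<in> Waff"
  show "sep_one W S v \<subseteq> Nset v"
    using N_tref by (auto simp: sep_one_def tref_def[symmetric])
  show "Nset v \<subseteq> sep_one W S v"
  proof
    fix r assume r: "r \<in> Nset v"
    obtain xs where red: "reduced_word W S v xs" using reduced_ex v by blast
    then obtain i where "i < length xs" "tref xs i = r" using N_char[OF red] r N_sub by blast
    then show "r \<in> sep_one W S v" using red unfolding sep_one_def tref_def by blast
  qed
qed

lemma vss: "v \<in> carrier W \<Longrightarrow> s \<in> S \<Longrightarrow> v \<otimes> s \<otimes> s = v"
  by (simp add: m_assoc S_sq S_carr)

lemma len_vs:
  assumes v: "v \<in> Waff" and s: "s \<in> S"
  shows "(len (v \<otimes> s) = Suc (len v) \<and> v \<otimes> s \<otimes> inv v \<notin> Nset v) \<or>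
         (len v = Suc (len (v \<otimes> s)) \<and> v \<otimes> s \<otimes> inv v \<in> Nset v)"
proof -
  let ?r = "v \<otimes> s \<otimes> inv v"
  have c: "v \<in> carrier W" "s \<in> carrier W" using v s Waff_carr S_carr by auto
  have rR: "?r \<in> R" using R_conj[OF v S_R[OF s]] .
  have rv: "?r \<otimes> v = v \<otimes> s" using c by (simp add: m_assoc)
  have rvs: "?r \<otimes> (v \<otimes> s) = v" using c s by (simp add: m_assoc S_sq)
  have vs: "v \<otimes> s \<in> Waff" using v s S_Waff mult_Waff by auto
  have NV: "(?r \<in> Nset v) = (len (v \<otimes> s) < len v)" using rR rv by (simp add: Nset_def)
  have NVS: "(?r \<in> Nset (v \<otimes> s)) = (len v < len (v \<otimes> s))" using rR rvs by (simp add: Nset_def)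
  have "(?r \<in> Nset (v \<otimes> s)) = (\<not> ?r \<in> Nset v)"
    using N_eta[OF vs rR] N_eta[OF v rR] eta_refl[OF rR v] rv by simp
  then have ne: "len v \<noteq> len (v \<otimes> s)" using NV NVS by auto
  have b1: "len (v \<otimes> s) \<le> len v + 1" using len_mult_S[OF v s] .
  have b2: "len v \<le> len (v \<otimes> s) + 1" using len_mult_S[OF vs s] vss[OF c(1) s] by simp
  show ?thesis using ne b1 b2 NV by auto
qed

lemma len_vs_up: "v \<in> Waff \<Longrightarrow> s \<in> S \<Longrightarrow> len v < len (v \<otimes> s) \<Longrightarrow> len (v \<otimes> s) = Suc (len v) \<and> v \<otimes> s \<otimes> inv v \<notin> Nset v"
  using len_vs by fastforce

lemma len_vs_down: "v \<in> Waff \<Longrightarrow> s \<in> S \<Longrightarrow> len (v \<otimes> s) < len v \<Longrightarrow> len v = Suc (len (v \<otimes> s)) \<and> v \<otimes> s \<otimes> inv v \<in> Nset v"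
  using len_vs by fastforce

lemma len_vs_ne: "v \<in> Waff \<Longrightarrow> s \<in> S \<Longrightarrow> len (v \<otimes> s) \<noteq> len v"
  using len_vs by fastforce

lemma N_up:
  assumes v: "v \<in> Waff" and s: "s \<in> S" and l: "len (v \<otimes> s) = Suc (len v)"
  shows "Nset (v \<otimes> s) = insert (v \<otimes> s \<otimes> inv v) (Nset v)"
proof -
  obtain xs where red: "reduced_word W S v xs" using reduced_ex v by blast
  have xs: "set xs \<subseteq> S" "wp xs = v" "length xs = len v" using reducedD[OF red] by auto
  have red2: "reduced_word W S (v \<otimes> s) (xs @ [s])"
    using xs s l by (simp add: reduced_word_def wp_append S_carr)
  have t1: "tref (xs @ [s]) i = tref xs i" if "i < length xs" for i
    using that by (simp add: tref_def nth_append)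
  have t2: "tref (xs @ [s]) (length xs) = v \<otimes> s \<otimes> inv v" using xs(2) by (simp add: tref_def nth_append)
  have "{..<length (xs @ [s])} = insert (length xs) {..<length xs}" by auto
  then have "Nset (v \<otimes> s) = insert (tref (xs @ [s]) (length xs)) (tref (xs @ [s]) ` {..<length xs})"
    using N_tref[OF red2] by simp
  also have "tref (xs @ [s]) ` {..<length xs} = tref xs ` {..<length xs}" using t1 by auto
  finally show ?thesis using t2 N_tref[OF red] by simp
qed

lemma N_S_up:
  assumes v: "v \<in> Waff" and s: "s \<in> S" and l: "len (s \<otimes> v) = Suc (len v)"
  shows "Nset (s \<otimes> v) = insert s ((\<lambda>r. s \<otimes> r \<otimes> s) ` Nset v)"
proof -
  obtain xs where red: "reduced_word W S v xs" using reduced_ex v by blast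
  have xs: "set xs \<subseteq> S" "wp xs = v" "length xs = len v" using reducedD[OF red] by auto
  have red2: "reduced_word W S (s \<otimes> v) (s # xs)"
    using xs s l by (simp add: reduced_word_def)
  have "{..<length (s # xs)} = insert 0 (Suc ` {..<length xs})" by (auto simp: image_iff less_Suc_eq_0_disj)
  then have "Nset (s \<otimes> v) = insert (tref (s # xs) 0) ((\<lambda>i. tref (s # xs) (Suc i)) ` {..<length xs})"
    using N_tref[OF red2] by (simp add: image_image)
  also have "(\<lambda>i. tref (s # xs) (Suc i)) ` {..<length xs} = (\<lambda>r. s \<otimes> r \<otimes> s) ` (tref xs ` {..<length xs})"
    using tref_Cons[OF s xs(1)] by (auto simp: image_iff)
  finally show ?thesis using tref_Cons0[OF s] N_tref[OF red] by simp
qed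

lemma N_mult_S:
  assumes v: "v \<in> Waff" and s: "s \<in> S"
  shows "Nset (v \<otimes> s) = (Nset v - {v \<otimes> s \<otimes> inv v}) \<union> ({v \<otimes> s \<otimes> inv v} - Nset v)"
proof (cases "len v < len (v \<otimes> s)")
  case True
  then show ?thesis using len_vs_up[OF v s] N_up[OF v s] by auto
next
  case False
  then have lt: "len (v \<otimes> s) < len v" using len_vs_ne[OF v s] by linarith
  let ?v = "v \<otimes> s"
  have c: "v \<in> carrier W" "s \<in> carrier W" using v s Waff_carr S_carr by auto
  have vs: "?v \<in> Waff" using v s S_Waff mult_Waff by auto
  have e1: "?v \<otimes> s = v" using vss c s by simp
  have e2: "?v \<otimes> s \<otimes> inv ?v = v \<otimes> s \<otimes> inv v"
    using c s by (simp add: inv_mult_group S_inv m_assoc)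
  have up: "len ?v < len (?v \<otimes> s)" using e1 lt by simp
  have "Nset v = insert (v \<otimes> s \<otimes> inv v) (Nset ?v)" and nin: "v \<otimes> s \<otimes> inv v \<notin> Nset ?v"
    using N_up[OF vs s] len_vs_up[OF vs s up] e1 e2 by auto
  then show ?thesis by auto
qed

subsection \<open>Conjugation by Omega and chambers\<close>

lemma conj_Waff: "x \<in> carrier W \<Longrightarrow> v \<in> Waff \<Longrightarrow> x \<otimes> v \<otimes> inv x \<in> Waff"
  using normal.inv_op_closed2[OF normal_Waff] by blast

lemma Om_inv: "u \<in> Om \<Longrightarrow> inv u \<in> Om" using subgroup.m_inv_closed[OF sub_Om] by blast
lemma Om_mult: "u \<in> Om \<Longrightarrow> u' \<in> Om \<Longrightarrow> u \<otimes> u' \<in> Om" using subgroup.m_closed[OF sub_Om] by blast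
lemma Om_one: "\<one> \<in> Om" using subgroup.one_closed[OF sub_Om] .
lemma Waff_one: "\<one> \<in> Waff" using subgroup.one_closed[OF sub_Waff] .

lemma conjS': "u \<in> Om \<Longrightarrow> s \<in> S \<Longrightarrow> inv u \<otimes> s \<otimes> u \<in> S"
  using conjS[of "inv u" s] Om_inv Om_carr by auto

lemma wp_conj: "u \<in> carrier W \<Longrightarrow> set xs \<subseteq> S \<Longrightarrow> wp (map (\<lambda>x. u \<otimes> x \<otimes> inv u) xs) = u \<otimes> wp xs \<otimes> inv u"
proof (induction xs)
  case Nil
  then show ?case by simp
next
  case (Cons x xs)
  have c: "x \<in> carrier W" "wp xs \<in> carrier W" using Cons.prems S_carr by auto
  have "wp (map (\<lambda>x. u \<otimes> x \<otimes> inv u) (x # xs)) = u \<otimes> x \<otimes> inv u \<otimes> (u \<otimes> wp xs \<otimes> inv u)"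
    using Cons by simp
  also have "\<dots> = u \<otimes> (x \<otimes> wp xs) \<otimes> inv u" using c Cons.prems by (simp add: m_assoc)
  finally show ?case by simp
qed

lemma len_conj_le: "u \<in> Om \<Longrightarrow> v \<in> Waff \<Longrightarrow> len (u \<otimes> v \<otimes> inv u) \<le> len v"
proof -
  assume u: "u \<in> Om" and v: "v \<in> Waff"
  obtain xs where red: "reduced_word W S v xs" using reduced_ex v by blast
  have xs: "set xs \<subseteq> S" "wp xs = v" "length xs = len v" using reducedD[OF red] by auto
  have st: "set (map (\<lambda>x. u \<otimes> x \<otimes> inv u) xs) \<subseteq> S" using xs conjS u by auto
  have "len (wp (map (\<lambda>x. u \<otimes> x \<otimes> inv u) xs)) \<le> length (map (\<lambda>x. u \<otimes> x \<otimes> inv u) xs)"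
    using len_le[OF st] .
  moreover have "wp (map (\<lambda>x. u \<otimes> x \<otimes> inv u) xs) = u \<otimes> v \<otimes> inv u" using wp_conj[OF Om_carr[OF u] xs(1)] xs(2) by simp
  ultimately show ?thesis using xs(3) by simp
qed

lemma len_conj: "u \<in> Om \<Longrightarrow> v \<in> Waff \<Longrightarrow> len (u \<otimes> v \<otimes> inv u) = len v"
proof -
  assume u: "u \<in> Om" and v: "v \<in> Waff"
  have c: "u \<in> carrier W" "v \<in> carrier W" using u v Om_carr Waff_carr by auto
  have "inv u \<otimes> (u \<otimes> v \<otimes> inv u) \<otimes> inv (inv u) = v" using c by (simp add: m_assoc)
  then have "len v \<le> len (u \<otimes> v \<otimes> inv u)"
    using len_conj_le[OF Om_inv[OF u] conj_Waff[OF c(1) v]] by simp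
  then show ?thesis using len_conj_le[OF u v] by simp
qed

lemma R_conjOm: "u \<in> Om \<Longrightarrow> r \<in> R \<Longrightarrow> u \<otimes> r \<otimes> inv u \<in> R"
proof -
  assume u: "u \<in> Om" and "r \<in> R"
  then obtain a s where r: "r = a \<otimes> s \<otimes> inv a" "a \<in> Waff" "s \<in> S" by (auto simp: R_def')
  have c: "a \<in> carrier W" "s \<in> carrier W" "u \<in> carrier W" using r u Waff_carr S_carr Om_carr by auto
  have "u \<otimes> r \<otimes> inv u = (u \<otimes> a \<otimes> inv u) \<otimes> (u \<otimes> s \<otimes> inv u) \<otimes> inv (u \<otimes> a \<otimes> inv u)"
    using c r by (simp add: m_assoc inv_mult_group)
  moreover have "u \<otimes> a \<otimes> inv u \<in> Waff" using conj_Waff c r by auto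
  ultimately show ?thesis using conjS[OF u r(3)] unfolding R_def' by blast
qed

lemma R_conjW: "x \<in> carrier W \<Longrightarrow> r \<in> R \<Longrightarrow> x \<otimes> r \<otimes> inv x \<in> R"
proof -
  assume x: "x \<in> carrier W" and "r \<in> R"
  then obtain a s where r: "r = a \<otimes> s \<otimes> inv a" "a \<in> Waff" "s \<in> S" by (auto simp: R_def')
  obtain v u where vu: "v \<in> Waff" "u \<in> Om" "x = v \<otimes> u" using decomp[OF x] by blast
  have c: "v \<in> carrier W" "u \<in> carrier W" using vu Waff_carr Om_carr by auto
  have "x \<otimes> r \<otimes> inv x = v \<otimes> (u \<otimes> r \<otimes> inv u) \<otimes> inv v"
    using c vu r S_carr Waff_carr by (simp add: m_assoc inv_mult_group)
  then show ?thesis using R_conj[OF vu(1) R_conjOm[OF vu(2)]] \<open>r \<in> R\<close> by simp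
qed

lemma N_conj: "u \<in> Om \<Longrightarrow> v \<in> Waff \<Longrightarrow> Nset (u \<otimes> v \<otimes> inv u) = (\<lambda>r. u \<otimes> r \<otimes> inv u) ` Nset v"
proof -
  assume u: "u \<in> Om" and v: "v \<in> Waff"
  have c: "u \<in> carrier W" "v \<in> carrier W" using u v Om_carr Waff_carr by auto
  have key: "len (u \<otimes> r \<otimes> inv u \<otimes> (u \<otimes> v \<otimes> inv u)) = len (r \<otimes> v)" if r: "r \<in> R" for r
  proof -
    have rc: "r \<in> carrier W" using r R_carr by auto
    have "u \<otimes> r \<otimes> inv u \<otimes> (u \<otimes> v \<otimes> inv u) = u \<otimes> (r \<otimes> v) \<otimes> inv u" using c rc by (simp add: m_assoc)
    then show ?thesis using len_conj[OF u] mult_Waff[OF R_Waff[OF r] v] by simp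
  qed
  show ?thesis
  proof
    show "(\<lambda>r. u \<otimes> r \<otimes> inv u) ` Nset v \<subseteq> Nset (u \<otimes> v \<otimes> inv u)"
      using key R_conjOm[OF u] len_conj[OF u v] by (auto simp: Nset_def)
    show "Nset (u \<otimes> v \<otimes> inv u) \<subseteq> (\<lambda>r. u \<otimes> r \<otimes> inv u) ` Nset v"
    proof
      fix r' assume r': "r' \<in> Nset (u \<otimes> v \<otimes> inv u)"
      let ?r = "inv u \<otimes> r' \<otimes> u"
      have rR: "?r \<in> R" using R_conjOm[OF Om_inv[OF u], of r'] r' c by (auto simp: Nset_def)
      have e: "u \<otimes> ?r \<otimes> inv u = r'" using c r' R_carr by (simp add: m_assoc Nset_def)
      have "?r \<in> Nset v" using key[OF rR] e r' len_conj[OF u v] rR by (simp add: Nset_def)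
      then show "r' \<in> (\<lambda>r. u \<otimes> r \<otimes> inv u) ` Nset v" using e by force
    qed
  qed
qed

abbreviation "ch \<equiv> chamber W Waff Om"

lemma ch_unique: "v \<in> Waff \<Longrightarrow> v' \<in> Waff \<Longrightarrow> u \<in> Om \<Longrightarrow> u' \<in> Om \<Longrightarrow> v \<otimes> u = v' \<otimes> u' \<Longrightarrow> v = v'"
proof -
  assume v: "v \<in> Waff" and v': "v' \<in> Waff" and u: "u \<in> Om" and u': "u' \<in> Om" and e: "v \<otimes> u = v' \<otimes> u'"
  have c: "v \<in> carrier W" "v' \<in> carrier W" "u \<in> carrier W" "u' \<in> carrier W" using v v' u u' Waff_carr Om_carr by auto
  have "inv v' \<otimes> v = u' \<otimes> inv u"
  proof -
    have "inv v' \<otimes> (v \<otimes> u) \<otimes> inv u = inv v' \<otimes> (v' \<otimes> u') \<otimes> inv u" using e by simp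
    then show ?thesis using c by (simp add: m_assoc)
  qed
  moreover have "inv v' \<otimes> v \<in> Waff" using v v' inv_Waff mult_Waff by auto
  moreover have "u' \<otimes> inv u \<in> Om" using u u' Om_inv Om_mult by auto
  ultimately have e1: "inv v' \<otimes> v = \<one>" using Waff_Om by auto
  have "v = v' \<otimes> (inv v' \<otimes> v)" using c by simp
  also have "\<dots> = v'" using e1 c by simp
  finally show "v = v'" .
qed

lemma ch_eq: "v \<in> Waff \<Longrightarrow> u \<in> Om \<Longrightarrow> ch (v \<otimes> u) = v"
  unfolding chamber_def
  by (rule the_equality) (auto intro: ch_unique[symmetric])

lemma ch_prop: "w \<in> carrier W \<Longrightarrow> ch w \<in> Waff \<and> (\<exists>u\<in>Om. w = ch w \<otimes> u)"
proof -
  assume w: "w \<in> carrier W"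
  obtain v u where vu: "v \<in> Waff" "u \<in> Om" "w = v \<otimes> u" using decomp[OF w] by blast
  then show ?thesis using ch_eq by auto
qed

lemma ch_one: "ch \<one> = \<one>"
  using ch_eq[OF Waff_one Om_one] by simp

lemma ch_Waff: "v \<in> Waff \<Longrightarrow> ch v = v"
  using ch_eq[OF _ Om_one] Waff_carr by simp

lemma ext_len_eq: "ext_len W Waff S Om w = len (ch w)"
  by (simp add: ext_len_def)

lemma ch_mult: "v \<in> Waff \<Longrightarrow> u \<in> Om \<Longrightarrow> w' \<in> carrier W \<Longrightarrow>
    ch (v \<otimes> u \<otimes> w') = v \<otimes> (u \<otimes> ch w' \<otimes> inv u)"
proof -
  assume v: "v \<in> Waff" and u: "u \<in> Om" and w': "w' \<in> carrier W"
  obtain u' where u': "u' \<in> Om" "w' = ch w' \<otimes> u'" and cw: "ch w' \<in> Waff" using ch_prop[OF w'] by blast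
  have c: "v \<in> carrier W" "u \<in> carrier W" "u' \<in> carrier W" "ch w' \<in> carrier W"
    using v u u' cw Waff_carr Om_carr by auto
  have "v \<otimes> u \<otimes> w' = v \<otimes> u \<otimes> (ch w' \<otimes> u')" by (subst u'(2)[symmetric]) (rule refl)
  also have "\<dots> = (v \<otimes> (u \<otimes> ch w' \<otimes> inv u)) \<otimes> (u \<otimes> u')"
    using c by (simp add: m_assoc)
  finally have "v \<otimes> u \<otimes> w' = (v \<otimes> (u \<otimes> ch w' \<otimes> inv u)) \<otimes> (u \<otimes> u')" .
  moreover have "v \<otimes> (u \<otimes> ch w' \<otimes> inv u) \<in> Waff" using mult_Waff[OF v conj_Waff[OF c(2) cw]] .
  ultimately show ?thesis using ch_eq Om_mult[OF u u'(1)] by simp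
qed

abbreviation "elen \<equiv> ext_len W Waff S Om"

lemma ch_carr: "w \<in> carrier W \<Longrightarrow> ch w \<in> carrier W" using ch_prop Waff_carr by blast

lemma ch_ws:
  assumes w: "w \<in> carrier W" and s: "s \<in> S"
  obtains u where "u \<in> Om" "w = ch w \<otimes> u" "u \<otimes> s \<otimes> inv u \<in> S"
    "ch (w \<otimes> s) = ch w \<otimes> (u \<otimes> s \<otimes> inv u)"
    "w \<otimes> s \<otimes> inv w = ch w \<otimes> (u \<otimes> s \<otimes> inv u) \<otimes> inv (ch w)"
proof -
  obtain u where u: "u \<in> Om" "w = ch w \<otimes> u" and cw: "ch w \<in> Waff" using ch_prop[OF w] by blast
  have c: "u \<in> carrier W" "ch w \<in> carrier W" "s \<in> carrier W" using u cw Om_carr Waff_carr S_carr s by auto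
  have "ch (w \<otimes> s) = ch (ch w \<otimes> u \<otimes> s)" using u(2) by simp
  also have "\<dots> = ch w \<otimes> (u \<otimes> s \<otimes> inv u)" using ch_mult[OF cw u(1) c(3)] ch_Waff[of s] S_Waff s by auto
  finally have 1: "ch (w \<otimes> s) = ch w \<otimes> (u \<otimes> s \<otimes> inv u)" .
  have "w \<otimes> s \<otimes> inv w = ch w \<otimes> u \<otimes> s \<otimes> inv (ch w \<otimes> u)" using u(2) by simp
  also have "\<dots> = ch w \<otimes> (u \<otimes> s \<otimes> inv u) \<otimes> inv (ch w)" using c by (simp add: m_assoc inv_mult_group)
  finally show ?thesis using that u 1 conjS[OF u(1) s] by blast
qed

lemma elen_S: "s \<in> S \<Longrightarrow> elen s = 1"
proof -
  assume s: "s \<in> S"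
  then have "s \<in> Waff" using S_Waff by auto
  then show ?thesis using ch_Waff len_S[OF s] by (simp add: ext_len_eq)
qed

lemma elen_Om: "u \<in> Om \<Longrightarrow> elen u = 0"
  using ch_eq[OF Waff_one] Om_carr by (simp add: ext_len_eq)

lemma elen_ws: "w \<in> carrier W \<Longrightarrow> s \<in> S \<Longrightarrow> elen (w \<otimes> s) = Suc (elen w) \<or> elen w = Suc (elen (w \<otimes> s))"
proof -
  assume w: "w \<in> carrier W" and s: "s \<in> S"
  obtain u where u: "u \<in> Om" "u \<otimes> s \<otimes> inv u \<in> S" "ch (w \<otimes> s) = ch w \<otimes> (u \<otimes> s \<otimes> inv u)"
    using ch_ws[OF w s] by metis
  show ?thesis using len_vs[OF conjunct1[OF ch_prop[OF w]] u(2)] u(3) by (auto simp: ext_len_eq)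
qed

lemma N_S: "s \<in> S \<Longrightarrow> Nset s = {s}"
proof -
  assume s: "s \<in> S"
  have "reduced_word W S s [s]" using s len_S S_carr by (simp add: reduced_word_def)
  then show ?thesis using N_tref tref_Cons0[OF s] by (simp add: lessThan_Suc)
qed

lemma N_one: "Nset \<one> = {}" by (simp add: Nset_def)

lemma sep1: "w \<in> carrier W \<Longrightarrow> H \<in> carrier W \<Longrightarrow> separates W Waff S Om H \<one> w \<longleftrightarrow> H \<in> Nset (ch w)"
proof -
  assume w: "w \<in> carrier W" and H: "H \<in> carrier W"
  have "inv \<one> \<otimes> H \<otimes> \<one> = H" using H by simp
  then show ?thesis using w sep_one_N[OF conjunct1[OF ch_prop[OF w]]] ch_one ch_carr
    by (simp add: separates_def Let_def)
qed

lemma sep2: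
  assumes w: "w \<in> carrier W" and w': "w' \<in> carrier W" and H: "H \<in> carrier W"
  shows "separates W Waff S Om H w (w \<otimes> w') \<longleftrightarrow> H \<in> (\<lambda>r. w \<otimes> r \<otimes> inv w) ` Nset (ch w')"
proof -
  obtain c u where u: "u \<in> Om" "w = c \<otimes> u" and cw: "c \<in> Waff" "ch w = c" using ch_prop[OF w] by blast
  have cw': "ch w' \<in> Waff" using ch_prop[OF w'] by blast
  have c: "u \<in> carrier W" "c \<in> carrier W" "ch w' \<in> carrier W" using u cw cw' Om_carr Waff_carr by auto
  have "ch (w \<otimes> w') = ch (c \<otimes> u \<otimes> w')" using u(2) by simp
  also have "\<dots> = c \<otimes> (u \<otimes> ch w' \<otimes> inv u)" using ch_mult[OF cw(1) u(1) w'] .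
  finally have e: "inv (ch w) \<otimes> ch (w \<otimes> w') = u \<otimes> ch w' \<otimes> inv u" using c cw(2) by simp
  have y: "u \<otimes> ch w' \<otimes> inv u \<in> Waff" using conj_Waff[OF c(1) cw'] .
  have "separates W Waff S Om H w (w \<otimes> w') \<longleftrightarrow> inv (ch w) \<otimes> H \<otimes> ch w \<in> (\<lambda>r. u \<otimes> r \<otimes> inv u) ` Nset (ch w')"
    unfolding separates_def Let_def e sep_one_N[OF y] N_conj[OF u(1) cw'] ..
  also have "\<dots> \<longleftrightarrow> H \<in> (\<lambda>r. w \<otimes> r \<otimes> inv w) ` Nset (ch w')"
  proof
    assume "inv (ch w) \<otimes> H \<otimes> ch w \<in> (\<lambda>r. u \<otimes> r \<otimes> inv u) ` Nset (ch w')"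
    then obtain r where r: "r \<in> Nset (ch w')" "inv c \<otimes> H \<otimes> c = u \<otimes> r \<otimes> inv u" using cw by blast
    have rc: "r \<in> carrier W" using r N_sub R_carr by blast
    have "H = c \<otimes> (inv c \<otimes> H \<otimes> c) \<otimes> inv c" using H c by (simp add: m_assoc)
    also have "\<dots> = w \<otimes> r \<otimes> inv w" using r(2) u(2) c rc by (simp add: m_assoc inv_mult_group)
    finally show "H \<in> (\<lambda>r. w \<otimes> r \<otimes> inv w) ` Nset (ch w')" using r(1) by blast
  next
    assume "H \<in> (\<lambda>r. w \<otimes> r \<otimes> inv w) ` Nset (ch w')"
    then obtain r where r: "r \<in> Nset (ch w')" "H = w \<otimes> r \<otimes> inv w" by blast
    have rc: "r \<in> carrier W" using r N_sub R_carr by blast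
    have "inv c \<otimes> H \<otimes> c = u \<otimes> r \<otimes> inv u" using r(2) u(2) c rc by (simp add: m_assoc inv_mult_group)
    then show "inv (ch w) \<otimes> H \<otimes> ch w \<in> (\<lambda>r. u \<otimes> r \<otimes> inv u) ` Nset (ch w')" using r(1) cw by auto
  qed
  finally show ?thesis .
qed

definition Xs :: "'w \<Rightarrow> 'w \<Rightarrow> 'w set" where
  "Xs w w' = {H \<in> R. separates W Waff S Om H \<one> w \<and> separates W Waff S Om H w (w \<otimes> w')}"

lemma Xs_eq: "w \<in> carrier W \<Longrightarrow> w' \<in> carrier W \<Longrightarrow> Xs w w' = Nset (ch w) \<inter> (\<lambda>r. w \<otimes> r \<otimes> inv w) ` Nset (ch w')"
proof -
  assume w: "w \<in> carrier W" and w': "w' \<in> carrier W"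
  have "H \<in> Xs w w' \<longleftrightarrow> H \<in> Nset (ch w) \<inter> (\<lambda>r. w \<otimes> r \<otimes> inv w) ` Nset (ch w')" for H
  proof (cases "H \<in> R")
    case True
    then show ?thesis using sep1[OF w R_carr[OF True]] sep2[OF w w' R_carr[OF True]] by (simp add: Xs_def)
  next
    case False
    then show ?thesis using N_sub by (auto simp: Xs_def)
  qed
  then show ?thesis by blast
qed

lemma Xs_finite: "w \<in> carrier W \<Longrightarrow> w' \<in> carrier W \<Longrightarrow> finite (Xs w w')"
  using Xs_eq N_finite ch_prop by (metis finite_Int)

lemma Xs_R: "Xs w w' \<subseteq> R" by (auto simp: Xs_def)

lemma XX_eq: "XX W Waff S Om w w' = (\<Sum>H \<in> Xs w w'. frag_of H)"
  by (simp add: XX_def Xs_def)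

end

locale main = cox W Waff S Om for W :: "'w monoid" (structure) and Waff S Om +
  fixes G :: "'g monoid" and T :: "'g set" and p :: "'g \<Rightarrow> 'w" and n :: "'w \<Rightarrow> 'g"
  assumes grpG: "group G"
    and hom_p: "p \<in> hom G W"
    and surj_p: "p ` carrier G = carrier W"
    and kerT: "T = {g \<in> carrier G. p g = \<one>\<^bsub>W\<^esub>}"
    and abT: "comm_group (G\<lparr>carrier := T\<rparr>)"
    and sec: "\<forall>w\<in>carrier W. n w \<in> carrier G \<and> p (n w) = w"
    and nmult: "\<forall>w\<in>carrier W. \<forall>w'\<in>carrier W.
                 ext_len W Waff S Om (w \<otimes>\<^bsub>W\<^esub> w') = ext_len W Waff S Om w + ext_len W Waff S Om w'
                 \<longrightarrow> n (w \<otimes>\<^bsub>W\<^esub> w') = n w \<otimes>\<^bsub>G\<^esub> n w'"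
begin

abbreviation gm (infixl "\<diamond>" 70) where "a \<diamond> b \<equiv> a \<otimes>\<^bsub>G\<^esub> b"
abbreviation "gi \<equiv> m_inv G"
abbreviation "g1 \<equiv> \<one>\<^bsub>G\<^esub>"

lemmas Gmc = monoid.m_closed[OF group.is_monoid[OF grpG]]
lemmas Gic = group.inv_closed[OF grpG]

lemma ghp: "group_hom G W p"
  using grpG hom_p is_group by (simp add: group_hom_def group_hom_axioms_def)

lemma T_sub: "subgroup T G"
  using group_hom.subgroup_kernel[OF ghp] kerT by (simp add: kernel_def)

lemma T_carr: "t \<in> T \<Longrightarrow> t \<in> carrier G" using kerT by auto

lemma T_comm: "a \<in> T \<Longrightarrow> b \<in> T \<Longrightarrow> a \<diamond> b = b \<diamond> a"
  using comm_monoid.m_comm[OF comm_group.axioms(1)[OF abT], of a b] by simp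

lemma p_mult: "a \<in> carrier G \<Longrightarrow> b \<in> carrier G \<Longrightarrow> p (a \<diamond> b) = p a \<otimes> p b"
  using hom_p by (simp add: hom_mult)
lemma p_inv: "a \<in> carrier G \<Longrightarrow> p (gi a) = inv (p a)"
  using group_hom.hom_inv[OF ghp] by simp
lemma p_carr: "a \<in> carrier G \<Longrightarrow> p a \<in> carrier W"
  using hom_p by (auto simp: hom_def)
lemma p_one: "p g1 = \<one>"
  using group_hom.hom_one[OF ghp] .

lemma T_mem: "t \<in> T \<longleftrightarrow> t \<in> carrier G \<and> p t = \<one>" using kerT by auto

lemma n_carr: "w \<in> carrier W \<Longrightarrow> n w \<in> carrier G" using sec by auto
lemma p_n: "w \<in> carrier W \<Longrightarrow> p (n w) = w" using sec by auto

lemma n_mult: "w \<in> carrier W \<Longrightarrow> w' \<in> carrier W \<Longrightarrow> elen (w \<otimes> w') = elen w + elen w' \<Longrightarrow> n (w \<otimes> w') = n w \<diamond> n w'"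
  using nmult by auto

lemma T_mult: "a \<in> T \<Longrightarrow> b \<in> T \<Longrightarrow> a \<diamond> b \<in> T" using subgroup.m_closed[OF T_sub] by blast
lemma T_inv: "a \<in> T \<Longrightarrow> gi a \<in> T" using subgroup.m_inv_closed[OF T_sub] by blast
lemma T_one: "g1 \<in> T" using subgroup.one_closed[OF T_sub] .

lemma conj_T: "g \<in> carrier G \<Longrightarrow> t \<in> T \<Longrightarrow> g \<diamond> t \<diamond> gi g \<in> T"
proof -
  assume g: "g \<in> carrier G" and t: "t \<in> T"
  have tc: "t \<in> carrier G" "p t = \<one>" using t T_mem by auto
  have "p (g \<diamond> t \<diamond> gi g) = p g \<otimes> p t \<otimes> inv (p g)"
    using g tc by (simp add: p_mult p_inv Gmc Gic)
  also have "\<dots> = \<one>" using tc p_carr[OF g] by simp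
  finally show ?thesis using g tc by (simp add: T_mem Gmc Gic)
qed

lemma act_indep:
  assumes g: "g \<in> carrier G" and g': "g' \<in> carrier G" and pg: "p g = p g'" and t: "t \<in> T"
  shows "g \<diamond> t \<diamond> gi g = g' \<diamond> t \<diamond> gi g'"
proof -
  interpret G: group G by (rule grpG)
  obtain k where kT: "k \<in> T" and g'e: "g' = g \<diamond> k"
  proof
    show "gi g \<diamond> g' \<in> T" using g g' pg by (simp add: T_mem p_mult p_inv p_carr)
    show "g' = g \<diamond> (gi g \<diamond> g')" using g g' by simp
  qed
  have kc: "k \<in> carrier G" using kT T_carr by auto
  have tc: "t \<in> carrier G" using t T_carr by auto
  have comm: "k \<diamond> t = t \<diamond> k" using T_comm[OF kT t] .
  have "g' \<diamond> t \<diamond> gi g' = g \<diamond> (k \<diamond> t) \<diamond> gi k \<diamond> gi g"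
    using g kc tc unfolding g'e by (simp add: G.m_assoc G.inv_mult_group)
  also have "\<dots> = g \<diamond> t \<diamond> (k \<diamond> gi k) \<diamond> gi g" unfolding comm using g kc tc by (simp add: G.m_assoc)
  also have "\<dots> = g \<diamond> t \<diamond> gi g" using kc g tc by simp
  finally show ?thesis by simp
qed

lemma conj_act_eq: "w \<in> carrier W \<Longrightarrow> t \<in> T \<Longrightarrow> conj_act G p w t = n w \<diamond> t \<diamond> gi (n w)"
proof -
  assume w: "w \<in> carrier W" and t: "t \<in> T"
  let ?g = "SOME g. g \<in> carrier G \<and> p g = w"
  have "?g \<in> carrier G \<and> p ?g = w" using someI[of "\<lambda>g. g \<in> carrier G \<and> p g = w" "n w"] w n_carr p_n by blast
  then show ?thesis unfolding conj_act_def Let_def using act_indep[OF _ n_carr[OF w] _ t] p_n[OF w] by auto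
qed

lemma elen_one: "elen \<one> = 0" using ch_one by (simp add: ext_len_eq)

lemma n_one: "n \<one> = g1"
proof -
  interpret G: group G by (rule grpG)
  have "n \<one> = n \<one> \<diamond> n \<one>" using n_mult[of \<one> \<one>] elen_one by simp
  then show ?thesis using n_carr[of \<one>] G.l_cancel_one'[of "n \<one>" "n \<one>"] by simp
qed

definition nsq :: "'w \<Rightarrow> 'g" where "nsq s = n s \<diamond> n s"

lemma nsq_T: "s \<in> S \<Longrightarrow> nsq s \<in> T"
  using n_carr[OF S_carr] p_n[OF S_carr] S_sq
  by (simp add: nsq_def T_mem p_mult Gmc)

lemma WD_up:
  assumes x: "x \<in> carrier W" and s: "s \<in> S" and s': "s' \<in> S" and e: "x \<otimes> s \<otimes> inv x = s'"
    and up: "elen (x \<otimes> s) = Suc (elen x)"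
  shows "n x \<diamond> nsq s \<diamond> gi (n x) = nsq s'"
proof -
  interpret G: group G by (rule grpG)
  have c: "s \<in> carrier W" "s' \<in> carrier W" using s s' S_carr by auto
  have "s' \<otimes> x = x \<otimes> s \<otimes> inv x \<otimes> x" using e by simp
  also have "\<dots> = x \<otimes> s" using x c by (simp add: m_assoc)
  finally have e2: "s' \<otimes> x = x \<otimes> s" .
  have n1: "n (x \<otimes> s) = n x \<diamond> n s" using n_mult[OF x c(1)] up elen_S[OF s] by simp
  have n2: "n (s' \<otimes> x) = n s' \<diamond> n x" using n_mult[OF c(2) x] up elen_S[OF s'] e2 by simp
  have key: "n x \<diamond> n s = n s' \<diamond> n x" using n1 n2 e2 by simp
  have cc: "n x \<in> carrier G" "n s \<in> carrier G" "n s' \<in> carrier G" using n_carr x c by auto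
  have "n x \<diamond> nsq s \<diamond> gi (n x) = (n x \<diamond> n s) \<diamond> n s \<diamond> gi (n x)" using cc by (simp add: nsq_def G.m_assoc)
  also have "\<dots> = (n s' \<diamond> n x) \<diamond> n s \<diamond> gi (n x)" by (simp only: key)
  also have "\<dots> = n s' \<diamond> (n x \<diamond> n s) \<diamond> gi (n x)" using cc by (simp add: G.m_assoc)
  also have "\<dots> = n s' \<diamond> (n s' \<diamond> n x) \<diamond> gi (n x)" by (simp only: key)
  also have "\<dots> = n s' \<diamond> n s'" using cc by (simp add: G.m_assoc)
  finally show ?thesis by (simp add: nsq_def)
qed

lemma WD_core:
  assumes x: "x \<in> carrier W" and s: "s \<in> S" and s': "s' \<in> S" and e: "x \<otimes> s \<otimes> inv x = s'"
  shows "n x \<diamond> nsq s \<diamond> gi (n x) = nsq s'"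
proof (cases "elen (x \<otimes> s) = Suc (elen x)")
  case True
  then show ?thesis using WD_up[OF assms] by simp
next
  case False
  interpret G: group G by (rule grpG)
  let ?x = "x \<otimes> s"
  have c: "s \<in> carrier W" using s S_carr by auto
  have xc: "?x \<in> carrier W" using x c by simp
  have dn: "elen x = Suc (elen ?x)" using elen_ws[OF x s] False by auto
  have xss: "?x \<otimes> s = x" using vss[OF x s] .
  have e': "?x \<otimes> s \<otimes> inv ?x = s'" using e x c s by (simp add: m_assoc inv_mult_group S_inv)
  have "n ?x \<diamond> nsq s \<diamond> gi (n ?x) = nsq s'" using WD_up[OF xc s s' e'] xss dn by simp
  moreover have "n x = n ?x \<diamond> n s" using n_mult[OF xc c] xss dn elen_S[OF s] by simp
  moreover have cc: "n ?x \<in> carrier G" "n s \<in> carrier G" using n_carr xc c by auto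
  ultimately show ?thesis using cc by (simp add: nsq_def G.m_assoc G.inv_mult_group)
qed

lemma WD:
  assumes a: "a \<in> carrier W" and a': "a' \<in> carrier W" and s: "s \<in> S" and s': "s' \<in> S"
    and e: "a \<otimes> s \<otimes> inv a = a' \<otimes> s' \<otimes> inv a'"
  shows "n a \<diamond> nsq s \<diamond> gi (n a) = n a' \<diamond> nsq s' \<diamond> gi (n a')"
proof -
  interpret G: group G by (rule grpG)
  let ?x = "inv a' \<otimes> a"
  have c: "s \<in> carrier W" "s' \<in> carrier W" using s s' S_carr by auto
  have xc: "?x \<in> carrier W" using a a' by simp
  have "?x \<otimes> s \<otimes> inv ?x = inv a' \<otimes> (a \<otimes> s \<otimes> inv a) \<otimes> a'" using a a' c by (simp add: m_assoc inv_mult_group)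
  also have "\<dots> = s'" unfolding e using a' c by (simp add: m_assoc)
  finally have core: "n ?x \<diamond> nsq s \<diamond> gi (n ?x) = nsq s'" using WD_core[OF xc s s'] by simp
  have cc: "n ?x \<in> carrier G" "n a' \<in> carrier G" "n a \<in> carrier G" using n_carr xc a a' by auto
  have nT: "nsq s \<in> T" "nsq s \<in> carrier G" using nsq_T[OF s] T_carr by auto
  have "n a' \<diamond> nsq s' \<diamond> gi (n a') = (n a' \<diamond> n ?x) \<diamond> nsq s \<diamond> gi (n a' \<diamond> n ?x)"
    unfolding core[symmetric] using cc nT by (simp add: G.m_assoc G.inv_mult_group)
  also have "\<dots> = n a \<diamond> nsq s \<diamond> gi (n a)"
  proof (rule act_indep)
    show "p (n a' \<diamond> n ?x) = p (n a)" using cc a a' xc by (simp add: p_mult p_n m_assoc[symmetric])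
  qed (use cc nT in auto)
  finally show ?thesis by simp
qed

definition ff :: "'w \<Rightarrow> 'g" where
  "ff H = (SOME g. \<exists>a s. a \<in> carrier W \<and> s \<in> S \<and> H = a \<otimes> s \<otimes> inv a \<and> g = n a \<diamond> nsq s \<diamond> gi (n a))"

lemma ff_eq: "a \<in> carrier W \<Longrightarrow> s \<in> S \<Longrightarrow> ff (a \<otimes> s \<otimes> inv a) = n a \<diamond> nsq s \<diamond> gi (n a)"
proof -
  assume a: "a \<in> carrier W" and s: "s \<in> S"
  let ?P = "\<lambda>g. \<exists>a' s'. a' \<in> carrier W \<and> s' \<in> S \<and> a \<otimes> s \<otimes> inv a = a' \<otimes> s' \<otimes> inv a' \<and> g = n a' \<diamond> nsq s' \<diamond> gi (n a')"
  have "?P (ff (a \<otimes> s \<otimes> inv a))" unfolding ff_def by (rule someI[of ?P]) (use a s in blast)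
  then obtain a' s' where "a' \<in> carrier W" "s' \<in> S" "a \<otimes> s \<otimes> inv a = a' \<otimes> s' \<otimes> inv a'"
      "ff (a \<otimes> s \<otimes> inv a) = n a' \<diamond> nsq s' \<diamond> gi (n a')" by blast
  then show ?thesis using WD[OF a _ s] by metis
qed

lemma ff_T: "H \<in> R \<Longrightarrow> ff H \<in> T"
proof -
  assume "H \<in> R"
  then obtain a s where H: "H = a \<otimes> s \<otimes> inv a" "a \<in> Waff" "s \<in> S" by (auto simp: R_def')
  then show ?thesis using ff_eq[of a s] Waff_carr conj_T[OF n_carr nsq_T] by simp
qed

abbreviation "FA \<equiv> free_Abelian_group R"
abbreviation "TT \<equiv> G\<lparr>carrier := T\<rparr>"

lemma grpTT: "group TT" using abT comm_group.axioms(2) by blast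
lemma carr_TT[simp]: "carrier TT = T" by simp
lemma mult_TT[simp]: "a \<otimes>\<^bsub>TT\<^esub> b = a \<diamond> b" by simp
lemma one_TT[simp]: "\<one>\<^bsub>TT\<^esub> = g1" by simp
lemma inv_TT: "t \<in> T \<Longrightarrow> inv\<^bsub>TT\<^esub> t = gi t"
  using group.m_inv_consistent[OF grpG T_sub] by simp

lemma hom_agree:
  assumes h1: "h1 \<in> hom FA TT" and h2: "h2 \<in> hom FA TT"
    and agr: "\<And>x. x \<in> R \<Longrightarrow> h1 (frag_of x) = h2 (frag_of x)"
    and c: "Poly_Mapping.keys c \<subseteq> R"
  shows "h1 c = h2 c"
proof -
  have gh: "group_hom FA TT h1" "group_hom FA TT h2"
    using h1 h2 grpTT by (simp_all add: group_hom_def group_hom_axioms_def)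
  show ?thesis
  proof (rule free_Abelian_group_induct[OF c])
    have "h1 0 = g1" using group_hom.hom_one[OF gh(1)] by simp
    moreover have "h2 0 = g1" using group_hom.hom_one[OF gh(2)] by simp
    ultimately show "h1 0 = h2 0" by simp
  next
    fix x y assume 2: "Poly_Mapping.keys x \<subseteq> R" "Poly_Mapping.keys y \<subseteq> R" "h1 x = h2 x" "h1 y = h2 y"
    have xy: "x - y = x \<otimes>\<^bsub>FA\<^esub> inv\<^bsub>FA\<^esub> y" using 2 by simp
    have cx: "x \<in> carrier FA" and ciy: "inv\<^bsub>FA\<^esub> y \<in> carrier FA" and cy: "y \<in> carrier FA" using 2
      by (auto intro: group.inv_closed[OF group_free_Abelian_group])
    have m1: "h1 (x \<otimes>\<^bsub>FA\<^esub> inv\<^bsub>FA\<^esub> y) = h1 x \<otimes>\<^bsub>TT\<^esub> h1 (inv\<^bsub>FA\<^esub> y)"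
      using group_hom.hom_mult[OF gh(1) cx ciy] .
    have m2: "h2 (x \<otimes>\<^bsub>FA\<^esub> inv\<^bsub>FA\<^esub> y) = h2 x \<otimes>\<^bsub>TT\<^esub> h2 (inv\<^bsub>FA\<^esub> y)"
      using group_hom.hom_mult[OF gh(2) cx ciy] .
    have i1: "h1 (inv\<^bsub>FA\<^esub> y) = inv\<^bsub>TT\<^esub> (h1 y)" using group_hom.hom_inv[OF gh(1) cy] .
    have i2: "h2 (inv\<^bsub>FA\<^esub> y) = inv\<^bsub>TT\<^esub> (h2 y)" using group_hom.hom_inv[OF gh(2) cy] .
    show "h1 (x - y) = h2 (x - y)" unfolding xy m1 m2 i1 i2 2(3) 2(4) by (rule refl)
  next
    fix a assume "a \<in> R"
    then show "h1 (frag_of a) = h2 (frag_of a)" using agr by simp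
  qed
qed

lemma hh_ex: "\<exists>h. h \<in> hom FA TT \<and> (\<forall>x\<in>R. h (frag_of x) = ff x)"
proof -
  have "ff ` R \<subseteq> carrier TT" using ff_T by auto
  then obtain h where "h \<in> hom FA TT" "\<And>x. x \<in> R \<Longrightarrow> h (frag_of x) = ff x"
    using comm_group.free_Abelian_group_universal[OF abT] by metis
  then show ?thesis by blast
qed

definition "hh = (SOME h. h \<in> hom FA TT \<and> (\<forall>x\<in>R. h (frag_of x) = ff x))"

lemma hh: "hh \<in> hom FA TT" "\<And>x. x \<in> R \<Longrightarrow> hh (frag_of x) = ff x"
  using someI_ex[OF hh_ex] unfolding hh_def by auto

lemma hh_T: "x \<in> carrier FA \<Longrightarrow> hh x \<in> T"
  using hh(1) by (auto simp: hom_def)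

lemma hh_add: "x \<in> carrier FA \<Longrightarrow> y \<in> carrier FA \<Longrightarrow> hh (x + y) = hh x \<diamond> hh y"
  using hom_mult[OF hh(1)] by fastforce

lemma hh_zero: "hh 0 = g1"
proof -
  have "group_hom FA TT hh" using hh(1) grpTT by (simp add: group_hom_def group_hom_axioms_def)
  then show ?thesis using group_hom.hom_one[of FA TT hh] by simp
qed

lemma ff_S: "s \<in> S \<Longrightarrow> ff s = nsq s"
proof -
  interpret G: group G by (rule grpG)
  assume s: "s \<in> S"
  have "ff (\<one> \<otimes> s \<otimes> inv \<one>) = n \<one> \<diamond> nsq s \<diamond> gi (n \<one>)" using ff_eq[OF one_closed s] .
  then show ?thesis using s S_carr nsq_T[OF s] T_carr n_one monoid.inv_one[OF group.is_monoid[OF grpG]] by simp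
qed

lemma hyp_act_carr: "w \<in> carrier W \<Longrightarrow> x \<in> carrier FA \<Longrightarrow> hyp_act W w x \<in> carrier FA"
proof -
  assume w: "w \<in> carrier W" and x: "x \<in> carrier FA"
  have "Poly_Mapping.keys (hyp_act W w x) \<subseteq> (\<Union>H \<in> Poly_Mapping.keys x. {w \<otimes> H \<otimes> inv w})"
    unfolding hyp_act_def using keys_frag_extend[of "\<lambda>H. frag_of (w \<otimes> H \<otimes> inv w)" x] by (simp add: keys_frag_of)
  also have "\<dots> \<subseteq> R" using x R_conjW[OF w] by auto
  finally show ?thesis by simp
qed

lemma conj_n_T: "w \<in> carrier W \<Longrightarrow> t \<in> T \<Longrightarrow> n w \<diamond> t \<diamond> gi (n w) \<in> T"
  using conj_T n_carr by blast

lemma ff_conj: "w \<in> carrier W \<Longrightarrow> H \<in> R \<Longrightarrow> ff (w \<otimes> H \<otimes> inv w) = n w \<diamond> ff H \<diamond> gi (n w)"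
proof -
  interpret G: group G by (rule grpG)
  assume w: "w \<in> carrier W" and H: "H \<in> R"
  then obtain a s where a: "H = a \<otimes> s \<otimes> inv a" "a \<in> Waff" "s \<in> S" by (auto simp: R_def')
  have c: "a \<in> carrier W" "s \<in> carrier W" using a Waff_carr S_carr by auto
  have "w \<otimes> H \<otimes> inv w = (w \<otimes> a) \<otimes> s \<otimes> inv (w \<otimes> a)" using a c w by (simp add: m_assoc inv_mult_group)
  then have "ff (w \<otimes> H \<otimes> inv w) = n (w \<otimes> a) \<diamond> nsq s \<diamond> gi (n (w \<otimes> a))" using ff_eq[of "w \<otimes> a" s] w c a by simp
  also have "\<dots> = (n w \<diamond> n a) \<diamond> nsq s \<diamond> gi (n w \<diamond> n a)"
    using act_indep[of "n (w \<otimes> a)" "n w \<diamond> n a" "nsq s"] w c n_carr nsq_T[OF a(3)]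
    by (simp add: p_mult p_n)
  also have "\<dots> = n w \<diamond> (n a \<diamond> nsq s \<diamond> gi (n a)) \<diamond> gi (n w)"
    using w c n_carr nsq_T[OF a(3)] T_carr by (simp add: G.m_assoc G.inv_mult_group)
  finally show ?thesis using ff_eq[of a s] a c by simp
qed

lemma equivariant:
  assumes w: "w \<in> carrier W" and x: "x \<in> carrier FA"
  shows "hh (hyp_act W w x) = conj_act G p w (hh x)"
proof -
  interpret G: group G by (rule grpG)
  have nw: "n w \<in> carrier G" using n_carr w by auto
  have h1: "(\<lambda>x. hh (hyp_act W w x)) \<in> hom FA TT"
  proof (rule homI)
    fix x y assume x: "x \<in> carrier FA" and y: "y \<in> carrier FA"
    show "hh (hyp_act W w x) \<in> carrier TT" using hh_T hyp_act_carr[OF w x] by simp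
    show "hh (hyp_act W w (x \<otimes>\<^bsub>FA\<^esub> y)) = hh (hyp_act W w x) \<otimes>\<^bsub>TT\<^esub> hh (hyp_act W w y)"
      using hh_add hyp_act_carr[OF w] x y by (simp add: hyp_act_def frag_extend_add)
  qed
  have h2: "(\<lambda>x. n w \<diamond> hh x \<diamond> gi (n w)) \<in> hom FA TT"
  proof (rule homI)
    fix x y assume x: "x \<in> carrier FA" and y: "y \<in> carrier FA"
    show "n w \<diamond> hh x \<diamond> gi (n w) \<in> carrier TT" using conj_n_T[OF w hh_T[OF x]] by simp
    have c: "hh x \<in> carrier G" "hh y \<in> carrier G" using hh_T x y T_carr by auto
    show "n w \<diamond> hh (x \<otimes>\<^bsub>FA\<^esub> y) \<diamond> gi (n w) = (n w \<diamond> hh x \<diamond> gi (n w)) \<otimes>\<^bsub>TT\<^esub> (n w \<diamond> hh y \<diamond> gi (n w))"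
      using hh_add x y c nw by (simp add: G.m_assoc)
  qed
  have "hh (hyp_act W w x) = n w \<diamond> hh x \<diamond> gi (n w)"
  proof (rule hom_agree[OF h1 h2])
    fix H assume H: "H \<in> R"
    show "hh (hyp_act W w (frag_of H)) = n w \<diamond> hh (frag_of H) \<diamond> gi (n w)"
      using hh(2) H R_conjW[OF w H] ff_conj[OF w H] by (simp add: hyp_act_def)
  qed (use x in simp)
  then show ?thesis using conj_act_eq[OF w hh_T[OF x]] by simp
qed

lemma unique:
  assumes h': "h' \<in> hom FA TT"
    and eq: "\<forall>w\<in>carrier W. \<forall>x\<in>carrier FA. h' (hyp_act W w x) = conj_act G p w (h' x)"
    and hs: "\<forall>s\<in>S. h' (frag_of s) = n s \<diamond> n s"
    and x: "x \<in> carrier FA"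
  shows "h' x = hh x"
proof (rule hom_agree[OF h' hh(1)])
  fix H assume H: "H \<in> R"
  then obtain a s where a: "H = a \<otimes> s \<otimes> inv a" "a \<in> Waff" "s \<in> S" by (auto simp: R_def')
  have ac: "a \<in> carrier W" using a Waff_carr by auto
  have "frag_of H = hyp_act W a (frag_of s)" using a by (simp add: hyp_act_def)
  then have "h' (frag_of H) = conj_act G p a (nsq s)"
    using eq ac a S_R hs by (simp add: nsq_def)
  also have "\<dots> = ff H" using conj_act_eq[OF ac nsq_T[OF a(3)]] ff_eq[OF ac a(3)] a by simp
  finally show "h' (frag_of H) = hh (frag_of H)" using hh(2)[OF H] by simp
qed (use x in simp)

subsection \<open>The cocycle formula\<close>

definition phi :: "'w \<Rightarrow> 'w \<Rightarrow> 'g" where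
  "phi w w' = n w \<diamond> n w' \<diamond> gi (n (w \<otimes> w'))"

lemma sumfrag_carr: "A \<subseteq> R \<Longrightarrow> (\<Sum>H\<in>A. frag_of H) \<in> carrier FA"
  by (rule sum_closed_free_Abelian_group) auto

lemma hh_union:
  assumes "finite A" "finite B" "A \<inter> B = {}" "A \<subseteq> R" "B \<subseteq> R"
  shows "hh (\<Sum>H\<in>A \<union> B. frag_of H) = hh (\<Sum>H\<in>A. frag_of H) \<diamond> hh (\<Sum>H\<in>B. frag_of H)"
proof -
  have "(\<Sum>H\<in>A \<union> B. frag_of H) = (\<Sum>H\<in>A. frag_of H) + (\<Sum>H\<in>B. frag_of H)"
    by (rule sum.union_disjoint) (use assms in auto)
  then show ?thesis using hh_add[OF sumfrag_carr[OF assms(4)] sumfrag_carr[OF assms(5)]] by simp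
qed

lemma hh_empty: "hh (\<Sum>H\<in>{}. frag_of H) = g1" using hh_zero by simp

lemma hh_single: "r \<in> R \<Longrightarrow> hh (\<Sum>H\<in>{r}. frag_of H) = ff r" using hh(2) by simp

lemma phi_s:
  assumes w: "w \<in> carrier W" and s: "s \<in> S"
  shows "phi w s = hh (XX W Waff S Om w s)"
proof -
  interpret G: group G by (rule grpG)
  obtain u where u: "u \<in> Om" "w = ch w \<otimes> u" "u \<otimes> s \<otimes> inv u \<in> S"
    "ch (w \<otimes> s) = ch w \<otimes> (u \<otimes> s \<otimes> inv u)"
    "w \<otimes> s \<otimes> inv w = ch w \<otimes> (u \<otimes> s \<otimes> inv u) \<otimes> inv (ch w)"
    using ch_ws[OF w s] by metis
  let ?c = "ch w" and ?s0 = "u \<otimes> s \<otimes> inv u" and ?r = "w \<otimes> s \<otimes> inv w"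
  have cW: "?c \<in> Waff" using ch_prop[OF w] by blast
  have sc: "s \<in> carrier W" "s \<in> Waff" using s S_carr S_Waff by auto
  have ws: "w \<otimes> s \<in> carrier W" using w sc by simp
  have Xs1: "Xs w s = Nset ?c \<inter> {?r}" using Xs_eq[OF w sc(1)] ch_Waff[OF sc(2)] N_S[OF s] by simp
  have ncs: "n w \<in> carrier G" "n s \<in> carrier G" "n (w \<otimes> s) \<in> carrier G" using n_carr w sc ws by auto
  show ?thesis
  proof (cases "len ?c < len (?c \<otimes> ?s0)")
    case True
    then have up: "len (?c \<otimes> ?s0) = Suc (len ?c)" "?r \<notin> Nset ?c" using len_vs_up[OF cW u(3)] u(5) by auto
    have "elen (w \<otimes> s) = elen w + elen s" using up u(4) elen_S[OF s] by (simp add: ext_len_eq)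
    then have "n (w \<otimes> s) = n w \<diamond> n s" using n_mult[OF w sc(1)] by simp
    then have "phi w s = g1" using ncs by (simp add: phi_def G.m_assoc)
    moreover have "Xs w s = {}" using Xs1 up by auto
    ultimately show ?thesis using hh_empty by (simp add: XX_eq)
  next
    case False
    then have lt: "len (?c \<otimes> ?s0) < len ?c" using len_vs_ne[OF cW u(3)] by linarith
    then have dn: "len ?c = Suc (len (?c \<otimes> ?s0))" "?r \<in> Nset ?c" using len_vs_down[OF cW u(3)] u(5) by auto
    have wss: "w \<otimes> s \<otimes> s = w" using vss[OF w s] .
    have "elen (w \<otimes> s \<otimes> s) = elen (w \<otimes> s) + elen s" using dn u(4) elen_S[OF s] wss by (simp add: ext_len_eq)
    then have nw: "n w = n (w \<otimes> s) \<diamond> n s" using n_mult[OF ws sc(1)] wss by simp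
    have "phi w s = n (w \<otimes> s) \<diamond> nsq s \<diamond> gi (n (w \<otimes> s))"
      unfolding phi_def nsq_def using nw ncs by (simp add: G.m_assoc)
    also have "\<dots> = ff ((w \<otimes> s) \<otimes> s \<otimes> inv (w \<otimes> s))" using ff_eq[OF ws s] by simp
    also have "(w \<otimes> s) \<otimes> s \<otimes> inv (w \<otimes> s) = ?r" using w sc s by (simp add: inv_mult_group S_inv m_assoc)
    finally have "phi w s = ff ?r" .
    moreover have "Xs w s = {?r}" using Xs1 dn by auto
    moreover have "?r \<in> R" using R_conjW[OF w S_R[OF s]] .
    ultimately show ?thesis using hh_single by (simp add: XX_eq)
  qed
qed

lemma phi_zero:
  assumes w: "w \<in> carrier W" and w': "w' \<in> carrier W" and l: "elen w' = 0"
  shows "phi w w' = hh (XX W Waff S Om w w')"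
proof -
  interpret G: group G by (rule grpG)
  obtain u' where u': "u' \<in> Om" "w' = ch w' \<otimes> u'" and cw': "ch w' \<in> Waff" using ch_prop[OF w'] by blast
  have c1: "ch w' = \<one>" using len0[OF cw'] l by (simp add: ext_len_eq)
  obtain u where u: "u \<in> Om" "w = ch w \<otimes> u" and cw: "ch w \<in> Waff" using ch_prop[OF w] by blast
  have uc: "u \<in> carrier W" using u Om_carr by auto
  have "ch (w \<otimes> w') = ch (ch w \<otimes> u \<otimes> w')" using u(2) by simp
  also have "\<dots> = ch w" using ch_mult[OF cw u(1) w'] c1 uc cw Waff_carr by simp
  finally have "elen (w \<otimes> w') = elen w + elen w'" using l by (simp add: ext_len_eq)
  then have "n (w \<otimes> w') = n w \<diamond> n w'" using n_mult[OF w w'] by simp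
  then have "phi w w' = g1" using n_carr w w' by (simp add: phi_def G.m_assoc)
  moreover have "Xs w w' = {}" using Xs_eq[OF w w'] c1 N_one by simp
  ultimately show ?thesis using hh_empty by (simp add: XX_eq)
qed

lemma phi_split:
  assumes w: "w \<in> carrier W" and s: "s \<in> S" and w'': "w'' \<in> carrier W"
    and nn: "n (s \<otimes> w'') = n s \<diamond> n w''"
  shows "phi w (s \<otimes> w'') = phi w s \<diamond> phi (w \<otimes> s) w''"
proof -
  interpret G: group G by (rule grpG)
  have sc: "s \<in> carrier W" using s S_carr by auto
  have e: "w \<otimes> s \<otimes> w'' = w \<otimes> (s \<otimes> w'')" using w sc w'' by (simp add: m_assoc)
  have c: "n w \<in> carrier G" "n s \<in> carrier G" "n w'' \<in> carrier G" "n (w \<otimes> s) \<in> carrier G"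
    "n (w \<otimes> (s \<otimes> w'')) \<in> carrier G"
    using n_carr w sc w'' by auto
  show ?thesis unfolding phi_def nn e[symmetric] using c e by (simp add: G.m_assoc)
qed

theorem cocycle:
  "\<forall>w w'. w \<in> carrier W \<longrightarrow> w' \<in> carrier W \<longrightarrow> elen w' = k \<longrightarrow> phi w w' = hh (XX W Waff S Om w w')"
proof (induction k)
  case 0
  then show ?case using phi_zero by blast
next
  case (Suc k)
  show ?case
  proof (intro allI impI)
    fix w w' assume w: "w \<in> carrier W" and w': "w' \<in> carrier W" and l: "elen w' = Suc k"
    obtain u' where u': "u' \<in> Om" "w' = ch w' \<otimes> u'" and cw': "ch w' \<in> Waff" using ch_prop[OF w'] by blast
    obtain xs where red: "reduced_word W S (ch w') xs" using reduced_ex cw' by blast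
    have xs: "set xs \<subseteq> S" "wp xs = ch w'" "length xs = Suc k" using reducedD[OF red] l by (auto simp: ext_len_eq)
    then obtain s ys where sys: "xs = s # ys" by (cases xs) auto
    have s: "s \<in> S" and ys: "set ys \<subseteq> S" using xs sys by auto
    let ?v = "wp ys"
    have vW: "?v \<in> Waff" using wp_Waff[OF ys] .
    have sc: "s \<in> carrier W" "s \<in> Waff" using s S_carr S_Waff by auto
    have cw'e: "ch w' = s \<otimes> ?v" using xs sys by simp
    have lv1: "len ?v \<le> k" using len_le[OF ys] xs sys by simp
    have lv2: "Suc k \<le> len ?v + 1" using len_S_mult[OF vW s] cw'e xs l by (simp add: ext_len_eq)
    have lv: "len ?v = k" using lv1 lv2 by simp
    have lsv: "len (s \<otimes> ?v) = Suc (len ?v)" using cw'e l lv by (simp add: ext_len_eq)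
    let ?w'' = "?v \<otimes> u'"
    have uc: "u' \<in> carrier W" using u' Om_carr by auto
    have w''c: "?w'' \<in> carrier W" using vW uc Waff_carr by simp
    have chw'': "ch ?w'' = ?v" using ch_eq[OF vW u'(1)] .
    have lw'': "elen ?w'' = k" using chw'' lv by (simp add: ext_len_eq)
    have w'e: "w' = s \<otimes> ?w''" using u'(2) cw'e sc vW uc Waff_carr by (simp add: m_assoc)
    have "elen (s \<otimes> ?w'') = elen s + elen ?w''" using w'e l lw'' elen_S[OF s] by simp
    then have nn: "n (s \<otimes> ?w'') = n s \<diamond> n ?w''" using n_mult[OF sc(1) w''c] by simp
    have ws: "w \<otimes> s \<in> carrier W" using w sc by simp
    have split: "phi w w' = phi w s \<diamond> phi (w \<otimes> s) ?w''" using phi_split[OF w s w''c nn] w'e by simp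
    have IH: "phi (w \<otimes> s) ?w'' = hh (XX W Waff S Om (w \<otimes> s) ?w'')" using Suc.IH ws w''c lw'' by blast
    have P1: "phi w s = hh (XX W Waff S Om w s)" using phi_s[OF w s] .
    let ?A = "Nset (ch w)" and ?r = "w \<otimes> s \<otimes> inv w"
    let ?B = "(\<lambda>x. (w \<otimes> s) \<otimes> x \<otimes> inv (w \<otimes> s)) ` Nset ?v"
    have Nv_c: "Nset ?v \<subseteq> carrier W" using N_sub R_carr by blast
    have X1: "Xs w s = ?A \<inter> {?r}" using Xs_eq[OF w sc(1)] ch_Waff[OF sc(2)] N_S[OF s] by simp
    have "(\<lambda>r. w \<otimes> r \<otimes> inv w) ` Nset (ch w') = insert ?r ((\<lambda>r. w \<otimes> r \<otimes> inv w) ` (\<lambda>r. s \<otimes> r \<otimes> s) ` Nset ?v)"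
      using N_S_up[OF vW s lsv] cw'e by simp
    also have "(\<lambda>r. w \<otimes> r \<otimes> inv w) ` (\<lambda>r. s \<otimes> r \<otimes> s) ` Nset ?v = ?B"
      unfolding image_image using Nv_c w sc s
      by (intro image_cong refl) (auto simp: m_assoc inv_mult_group S_inv)
    finally have X2: "Xs w w' = ?A \<inter> insert ?r ?B" using Xs_eq[OF w w'] by simp
    obtain u where u: "u \<in> Om" "w = ch w \<otimes> u" "u \<otimes> s \<otimes> inv u \<in> S"
      "ch (w \<otimes> s) = ch w \<otimes> (u \<otimes> s \<otimes> inv u)"
      "w \<otimes> s \<otimes> inv w = ch w \<otimes> (u \<otimes> s \<otimes> inv u) \<otimes> inv (ch w)"
      using ch_ws[OF w s] by metis
    have cW: "ch w \<in> Waff" using ch_prop[OF w] by blast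
    have Nws: "Nset (ch (w \<otimes> s)) = (?A - {?r}) \<union> ({?r} - ?A)"
      using N_mult_S[OF cW u(3)] u(4) u(5) by simp
    have rB: "?r \<notin> ?B"
    proof
      assume "?r \<in> ?B"
      then obtain x where x: "x \<in> Nset ?v" "?r = (w \<otimes> s) \<otimes> x \<otimes> inv (w \<otimes> s)" by blast
      have xc: "x \<in> carrier W" using x Nv_c by auto
      from x(2) have "inv (w \<otimes> s) \<otimes> ?r \<otimes> (w \<otimes> s) = inv (w \<otimes> s) \<otimes> ((w \<otimes> s) \<otimes> x \<otimes> inv (w \<otimes> s)) \<otimes> (w \<otimes> s)"
        by (rule arg_cong[where f = "\<lambda>z. inv (w \<otimes> s) \<otimes> z \<otimes> (w \<otimes> s)"])
      also have "\<dots> = x" using xc w sc by (simp add: m_assoc inv_mult_group)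
      finally have "inv (w \<otimes> s) \<otimes> ?r \<otimes> (w \<otimes> s) = x" .
      moreover have "inv (w \<otimes> s) \<otimes> ?r \<otimes> (w \<otimes> s) = s" using w sc s by (simp add: m_assoc inv_mult_group S_inv)
      ultimately have "s \<in> Nset ?v" using x by simp
      then show False using lsv by (simp add: Nset_def)
    qed
    have "Xs (w \<otimes> s) ?w'' = Nset (ch (w \<otimes> s)) \<inter> ?B" using Xs_eq[OF ws w''c] chw'' by simp
    also have "\<dots> = ((?A - {?r}) \<union> ({?r} - ?A)) \<inter> ?B" using Nws by simp
    also have "\<dots> = ?A \<inter> ?B" using rB by blast
    finally have X3: "Xs (w \<otimes> s) ?w'' = ?A \<inter> ?B" .
    have XU: "Xs w w' = Xs w s \<union> Xs (w \<otimes> s) ?w''" using X1 X2 X3 by auto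
    have XD: "Xs w s \<inter> Xs (w \<otimes> s) ?w'' = {}" using X1 X3 rB by auto
    have "hh (XX W Waff S Om w w') = hh (XX W Waff S Om w s) \<diamond> hh (XX W Waff S Om (w \<otimes> s) ?w'')"
      unfolding XX_eq XU using hh_union[OF Xs_finite[OF w sc(1)] Xs_finite[OF ws w''c] XD Xs_R Xs_R] .
    then show "phi w w' = hh (XX W Waff S Om w w')" using split IH P1 by simp
  qed
qed

end
theorem lemma2p8p2:
  fixes W :: "'w monoid" and Waff S Om :: "'w set"
    and G :: "'g monoid" and T :: "'g set" and p :: "'g \<Rightarrow> 'w" and n :: "'w \<Rightarrow> 'g"
  assumes ext: "ext_coxeter W Waff S Om"
    and grpG: "group G"
    and hom_p: "p \<in> hom G W"
    and surj_p: "p ` carrier G = carrier W"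
    and kerT: "T = {g \<in> carrier G. p g = \<one>\<^bsub>W\<^esub>}"
    and abT: "comm_group (G\<lparr>carrier := T\<rparr>)"
    and sec: "\<forall>w\<in>carrier W. n w \<in> carrier G \<and> p (n w) = w"
    and mult: "\<forall>w\<in>carrier W. \<forall>w'\<in>carrier W.
                 ext_len W Waff S Om (w \<otimes>\<^bsub>W\<^esub> w') = ext_len W Waff S Om w + ext_len W Waff S Om w'
                 \<longrightarrow> n (w \<otimes>\<^bsub>W\<^esub> w') = n w \<otimes>\<^bsub>G\<^esub> n w'"
  shows "\<exists>h. (h \<in> hom (free_Abelian_group (hyperplanes W Waff S)) (G\<lparr>carrier := T\<rparr>) \<and>
              (\<forall>w\<in>carrier W. \<forall>x\<in>carrier (free_Abelian_group (hyperplanes W Waff S)).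
                  h (hyp_act W w x) = conj_act G p w (h x)) \<and>
              (\<forall>s\<in>S. h (frag_of s) = n s \<otimes>\<^bsub>G\<^esub> n s)) \<and>
          (\<forall>h'. (h' \<in> hom (free_Abelian_group (hyperplanes W Waff S)) (G\<lparr>carrier := T\<rparr>) \<and>
              (\<forall>w\<in>carrier W. \<forall>x\<in>carrier (free_Abelian_group (hyperplanes W Waff S)).
                  h' (hyp_act W w x) = conj_act G p w (h' x)) \<and>
              (\<forall>s\<in>S. h' (frag_of s) = n s \<otimes>\<^bsub>G\<^esub> n s))
             \<longrightarrow> (\<forall>x\<in>carrier (free_Abelian_group (hyperplanes W Waff S)). h' x = h x)) \<and>
          (\<forall>w\<in>carrier W. \<forall>w'\<in>carrier W.
              n w \<otimes>\<^bsub>G\<^esub> n w' \<otimes>\<^bsub>G\<^esub> inv\<^bsub>G\<^esub> (n (w \<otimes>\<^bsub>W\<^esub> w')) = h (XX W Waff S Om w w'))"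
proof -
  have grpW: "group W" using ext by (simp add: ext_coxeter_def)
  interpret M: main W Waff S Om G T p n
    by (rule main.intro[OF cox.intro[OF grpW] main_axioms.intro])
       (use ext grpG hom_p surj_p kerT abT sec mult in \<open>simp_all add: cox_axioms_def\<close>)
  show ?thesis
  proof (intro exI conjI)
    show "M.hh \<in> hom (free_Abelian_group (hyperplanes W Waff S)) (G\<lparr>carrier := T\<rparr>)" using M.hh(1) .
    show "\<forall>w\<in>carrier W. \<forall>x\<in>carrier (free_Abelian_group (hyperplanes W Waff S)).
                  M.hh (hyp_act W w x) = conj_act G p w (M.hh x)" using M.equivariant by blast
    show "\<forall>s\<in>S. M.hh (frag_of s) = n s \<otimes>\<^bsub>G\<^esub> n s"
      using M.hh(2) M.S_R M.ff_S by (simp add: M.nsq_def)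
    show "\<forall>h'. (h' \<in> hom (free_Abelian_group (hyperplanes W Waff S)) (G\<lparr>carrier := T\<rparr>) \<and>
              (\<forall>w\<in>carrier W. \<forall>x\<in>carrier (free_Abelian_group (hyperplanes W Waff S)).
                  h' (hyp_act W w x) = conj_act G p w (h' x)) \<and>
              (\<forall>s\<in>S. h' (frag_of s) = n s \<otimes>\<^bsub>G\<^esub> n s))
             \<longrightarrow> (\<forall>x\<in>carrier (free_Abelian_group (hyperplanes W Waff S)). h' x = M.hh x)"
      using M.unique by blast
    show "\<forall>w\<in>carrier W. \<forall>w'\<in>carrier W.
              n w \<otimes>\<^bsub>G\<^esub> n w' \<otimes>\<^bsub>G\<^esub> inv\<^bsub>G\<^esub> (n (w \<otimes>\<^bsub>W\<^esub> w')) = M.hh (XX W Waff S Om w w')"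
      using M.cocycle by (simp add: M.phi_def)
  qed
qed

end
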